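(* Let $G$ be a connected $m$-uniform hypergraph on $n$ vertices which is odd-colorable. Suppose its incidence matrix $B_G$ has Smith normal form over $\mathbb{Z}_m$ with nonzero diagonal entries $d_1,\dots,d_r$. Then (1) $s(\mathcal{Q}(G))=s(\mathcal{L}(G))=s(\mathcal{A}(G))=m^{n-1-r}\prod_{i=1}^r d_i$; (2) $s(\mathcal{Q}(G))=|\mathbb{PV}_{\rho(\mathcal{Q}(G))}(\mathcal{Q}(G))|=|\mathbb{PV}_0(\mathcal{Q}(G))|=|\mathbb{PV}_0(\mathcal{L}(G))|$.
   Context: An $m$-uniform hypergraph $G$ on vertices $v_1,\dots,v_n$ has edges that are $m$-subsets. Adjacency tensor $\mathcal{A}(G)$: order $m$, dimension $n$, entry $\frac1{(m-1)!}$ at $(i_1,\dots,i_m)$ if $\{v_{i_1},\dots,v_{i_m}\}$ is an edge, else $0$. $\mathcal{D}(G)$ is the diagonal tensor of vertex degrees; $\mathcal{L}(G)=\mathcal{D}(G)-\mathcal{A}(G)$ (Laplacian tensor) and $\mathcal{Q}(G)=\mathcal{D}(G)+\mathcal{A}(G)$ (signless Laplacian tensor). For even $m$, $G$ is odd-colorable if there is $f:V(G)\to[m]$ with $\sum_{v\in e}f(v)\equiv m/2\pmod m$ for every edge $e$. Incidence matrix $B_G$: $b_{e,v}=1$ if $v\in e$, else $0$. Smith normal form over $\mathbb{Z}_m$: invertible $P,Q$ over $\mathbb{Z}_m$ with $PB_GQ$ diagonal with entries $d_1,\dots,d_r,0,\dots,0$, $1\le d_i\le m-1$, $d_i\mid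 d_{i+1}$, $d_i\mid m$. For a tensor $\mathcal{T}$, $(\mathcal{T}x^{m-1})_i=\sum_{i_2,\dots,i_m}t_{ii_2\cdots i_m}x_{i_2}\cdots x_{i_m}$; $\rho(\mathcal{T})$ is the largest modulus of eigenvalues $\lambda$ (those with $\mathcal{T}x^{m-1}=\lambda x^{[m-1]}$, $x\ne0$, $x^{[m-1]}=(x_i^{m-1})$); $\mathbb{PV}_\lambda(\mathcal{T})=\{x\in\mathbb{P}^{n-1}:\mathcal{T}x^{m-1}=\lambda x^{[m-1]}\}$. Stabilizing index: $s(\mathcal{T})=|\{D=\mathrm{diag}(d_1,\dots,d_n)\text{ invertible complex}:\mathcal{T}=D^{-(m-1)}\mathcal{T}D,\ d_1=1\}|$, where $D^{-(m-1)}\mathcal{T}D$ has entries $d_{i_1}^{-(m-1)}t_{i_1\cdots i_m}d_{i_2}\cdots d_{i_m}$. *)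

theory Defs
  imports Complex_Main
begin

text \<open>Vertices are 0,...,n-1 (v_{i+1} is vertex i). Tensors of order m and dimension n are functions on index
lists of length m with entries in {0..<n}; vectors in C^n are functions nat => complex
vanishing outside {0..<n}.\<close>

definition uniform_hypergraph :: "nat \<Rightarrow> nat \<Rightarrow> nat set set \<Rightarrow> bool" where
  "uniform_hypergraph m n E \<longleftrightarrow> (\<forall>e\<in>E. e \<subseteq> {0..<n} \<and> card e = m)"

definition hg_connected :: "nat \<Rightarrow> nat set set \<Rightarrow> bool" where
  "hg_connected n E \<longleftrightarrow>
     (\<forall>u<n. \<forall>v<n. (u, v) \<in> {(a, b). \<exists>e\<in>E. a \<in> e \<and> b \<in> e}\<^sup>*)"

definition odd_colorable :: "nat \<Rightarrow> nat set set \<Rightarrow> bool" where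
  "odd_colorable m E \<longleftrightarrow> even m \<and>
     (\<exists>f :: nat \<Rightarrow> nat. (\<forall>v. f v \<in> {1..m}) \<and>
        (\<forall>e\<in>E. (\<Sum>v\<in>e. f v) mod m = m div 2))"

definition hg_degree :: "nat set set \<Rightarrow> nat \<Rightarrow> nat" where
  "hg_degree E v = card {e\<in>E. v \<in> e}"

definition idx :: "nat \<Rightarrow> nat \<Rightarrow> nat list set" where
  "idx k n = {is. length is = k \<and> set is \<subseteq> {0..<n}}"

definition adj_tensor :: "nat \<Rightarrow> nat \<Rightarrow> nat set set \<Rightarrow> nat list \<Rightarrow> complex" where
  "adj_tensor m n E is =
     (if is \<in> idx m n \<and> set is \<in> E then 1 / of_nat (fact (m - 1)) else 0)"

definition deg_tensor :: "nat \<Rightarrow> nat \<Rightarrow> nat set set \<Rightarrow> nat list \<Rightarrow> complex" where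
  "deg_tensor m n E is =
     (if \<exists>i<n. is = replicate m i then of_nat (hg_degree E (hd is)) else 0)"

definition lap_tensor :: "nat \<Rightarrow> nat \<Rightarrow> nat set set \<Rightarrow> nat list \<Rightarrow> complex" where
  "lap_tensor m n E is = deg_tensor m n E is - adj_tensor m n E is"

definition slap_tensor :: "nat \<Rightarrow> nat \<Rightarrow> nat set set \<Rightarrow> nat list \<Rightarrow> complex" where
  "slap_tensor m n E is = deg_tensor m n E is + adj_tensor m n E is"

definition tensor_apply ::
  "nat \<Rightarrow> nat \<Rightarrow> (nat list \<Rightarrow> complex) \<Rightarrow> (nat \<Rightarrow> complex) \<Rightarrow> nat \<Rightarrow> complex" where
  "tensor_apply m n T x i = (\<Sum>is\<in>idx (m - 1) n. T (i # is) * (\<Prod>j<m - 1. x (is ! j)))"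

definition eigenpair ::
  "nat \<Rightarrow> nat \<Rightarrow> (nat list \<Rightarrow> complex) \<Rightarrow> complex \<Rightarrow> (nat \<Rightarrow> complex) \<Rightarrow> bool" where
  "eigenpair m n T lam x \<longleftrightarrow> (\<forall>i\<ge>n. x i = 0) \<and> (\<exists>i<n. x i \<noteq> 0) \<and>
     (\<forall>i<n. tensor_apply m n T x i = lam * x i ^ (m - 1))"

definition tensor_eigenvalue :: "nat \<Rightarrow> nat \<Rightarrow> (nat list \<Rightarrow> complex) \<Rightarrow> complex \<Rightarrow> bool" where
  "tensor_eigenvalue m n T lam \<longleftrightarrow> (\<exists>x. eigenpair m n T lam x)"

definition spectral_radius :: "nat \<Rightarrow> nat \<Rightarrow> (nat list \<Rightarrow> complex) \<Rightarrow> real" where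
  "spectral_radius m n T = Sup {cmod lam | lam. tensor_eigenvalue m n T lam}"

definition proj_eigvariety ::
  "nat \<Rightarrow> nat \<Rightarrow> (nat list \<Rightarrow> complex) \<Rightarrow> complex \<Rightarrow> (nat \<Rightarrow> complex) set set" where
  "proj_eigvariety m n T lam =
     {{(\<lambda>i. c * x i) | c. c \<noteq> 0} | x. eigenpair m n T lam x}"

text \<open>Stabilizing index; d i is the (i+1)-st diagonal entry, d 0 = 1.\<close>
definition stab_index :: "nat \<Rightarrow> nat \<Rightarrow> (nat list \<Rightarrow> complex) \<Rightarrow> nat" where
  "stab_index m n T = card {d :: nat \<Rightarrow> complex.
     (\<forall>i<n. d i \<noteq> 0) \<and> (\<forall>i\<ge>n. d i = 0) \<and> d 0 = 1 \<and>
     (\<forall>is\<in>idx m n. T is = inverse (d (is ! 0)) ^ (m - 1) * T is * (\<Prod>j\<in>{1..<m}. d (is ! j)))}"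

text \<open>Incidence matrix, rows indexed by 0..<k via an enumeration e of the edges.\<close>
definition incidence :: "(nat \<Rightarrow> nat set) \<Rightarrow> nat \<Rightarrow> nat \<Rightarrow> int" where
  "incidence e a v = (if v \<in> e a then 1 else 0)"

definition invertible_mod :: "nat \<Rightarrow> nat \<Rightarrow> (nat \<Rightarrow> nat \<Rightarrow> int) \<Rightarrow> bool" where
  "invertible_mod m k P \<longleftrightarrow> (\<exists>P'. \<forall>i<k. \<forall>j<k.
      (\<Sum>l<k. P i l * P' l j) mod int m = (if i = j then 1 else 0) mod int m \<and>
      (\<Sum>l<k. P' i l * P l j) mod int m = (if i = j then 1 else 0) mod int m)"

definition has_snf_mod ::
  "nat \<Rightarrow> nat \<Rightarrow> nat \<Rightarrow> (nat \<Rightarrow> nat \<Rightarrow> int) \<Rightarrow> nat \<Rightarrow> (nat \<Rightarrow> int) \<Rightarrow> bool" where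
  "has_snf_mod m k n B r d \<longleftrightarrow> r \<le> k \<and> r \<le> n \<and>
     (\<forall>i<r. 1 \<le> d i \<and> d i \<le> int m - 1 \<and> d i dvd int m) \<and>
     (\<forall>i. Suc i < r \<longrightarrow> d i dvd d (Suc i)) \<and>
     (\<exists>P Q. invertible_mod m k P \<and> invertible_mod m n Q \<and>
        (\<forall>i<k. \<forall>j<n. (\<Sum>a<k. \<Sum>b<n. P i a * B a b * Q b j) mod int m =
                        (if i = j \<and> i < r then d i else 0) mod int m))"

end

theory Submission
  imports Defs "HOL-Combinatorics.Multiset_Permutations" "HOL-Library.FuncSet" "HOL-Analysis.Analysis"
begin


lemma finite_idx: "finite (idx k n)"
proof -
  have "idx k n = {xs. set xs \<subseteq> {0..<n} \<and> length xs = k}" unfolding idx_def by auto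
  thus ?thesis using finite_lists_length_eq[of "{0..<n}" k] by simp
qed

locale hg =
  fixes m n :: nat and E :: "nat set set"
  assumes m2: "m \<ge> 2" and unif: "uniform_hypergraph m n E"
begin

lemma edge_sub: "e \<in> E \<Longrightarrow> e \<subseteq> {0..<n}" using unif unfolding uniform_hypergraph_def by auto
lemma edge_card: "e \<in> E \<Longrightarrow> card e = m" using unif unfolding uniform_hypergraph_def by auto
lemma edge_fin: "e \<in> E \<Longrightarrow> finite e" using edge_card m2 card.infinite by fastforce
lemma finE: "finite E"
proof -
  have "E \<subseteq> Pow {0..<n}" using edge_sub by auto
  thus ?thesis using finite_subset by blast
qed

definition Ei where "Ei i = {e\<in>E. i \<in> e}"
lemma finEi: "finite (Ei i)" using finE unfolding Ei_def by auto
lemma deg_Ei: "hg_degree E i = card (Ei i)" unfolding hg_degree_def Ei_def by simp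

lemma card_minus: "e \<in> E \<Longrightarrow> i \<in> e \<Longrightarrow> card (e - {i}) = m - 1"
  using edge_card edge_fin by (simp add: card_Diff_singleton)

lemma adj_apply:
  assumes i: "i < n"
  shows "tensor_apply m n (adj_tensor m n E) x i = (\<Sum>e\<in>Ei i. \<Prod>j\<in>e-{i}. x j)"
proof -
  define S where "S = {is \<in> idx (m-1) n. set (i # is) \<in> E}"
  define g where "g = (\<lambda>is::nat list. set (i # is))"
  define h where "h = (\<lambda>is. adj_tensor m n E (i # is) * (\<Prod>j<m - 1. x (is ! j)))"
  have fS: "finite S" using finite_idx unfolding S_def by auto
  have zero: "h is = 0" if "is \<in> idx (m-1) n - S" for "is"
    using that unfolding h_def S_def adj_tensor_def by auto
  have "tensor_apply m n (adj_tensor m n E) x i = sum h (idx (m-1) n)"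
    unfolding tensor_apply_def h_def by simp
  also have "\<dots> = sum h S"
    using zero finite_idx by (intro sum.mono_neutral_right) (auto simp: S_def)
  also have "\<dots> = (\<Sum>e\<in>Ei i. \<Sum>is\<in>{is\<in>S. g is = e}. h is)"
    using fS finEi by (intro sum.group[symmetric]) (auto simp: g_def S_def Ei_def)
  also have "\<dots> = (\<Sum>e\<in>Ei i. \<Prod>j\<in>e-{i}. x j)"
  proof (rule sum.cong[OF refl])
    fix e assume e: "e \<in> Ei i"
    hence eE: "e \<in> E" and ie: "i \<in> e" unfolding Ei_def by auto
    have eq1: "is \<in> permutations_of_set (e - {i})" if "is \<in> S" "g is = e" for "is"
    proof -
      have L: "length is = m - 1" and st: "set (i # is) = e" using that unfolding S_def idx_def g_def by auto
      have "card (set (i#is)) = length (i # is)" using st edge_card[OF eE] L m2 by simp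
      hence "distinct (i # is)" by (metis card_distinct)
      thus "is \<in> permutations_of_set (e - {i})" using st
        unfolding permutations_of_set_def by auto
    qed
    have eq2: "is \<in> S \<and> g is = e" if p: "is \<in> permutations_of_set (e - {i})" for "is"
    proof -
      have st: "set is = e - {i}" and d: "distinct is" using p unfolding permutations_of_set_def by auto
      have L: "length is = m - 1" using distinct_card[OF d] st card_minus[OF eE ie] by simp
      have "insert i e = e" using ie by auto
      thus ?thesis using st ie eE L edge_sub[OF eE] unfolding g_def S_def idx_def by auto
    qed
    have eq: "{is\<in>S. g is = e} = permutations_of_set (e - {i})"
      using eq1 eq2 by blast
    have hv: "h is = 1 / of_nat (fact (m-1)) * (\<Prod>j\<in>e-{i}. x j)"
      if p: "is \<in> permutations_of_set (e - {i})" for "is"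
    proof -
      have st: "set is = e - {i}" and d: "distinct is" using p unfolding permutations_of_set_def by auto
      have L: "length is = m - 1" using distinct_card[OF d] st card_minus[OF eE ie] by simp
      have "i # is \<in> idx m n" unfolding idx_def using L st edge_sub[OF eE] i m2 by auto
      moreover have "set (i # is) = e" using st ie by auto
      ultimately have a: "adj_tensor m n E (i # is) = 1 / of_nat (fact (m-1))"
        unfolding adj_tensor_def using eE by simp
      have "(\<Prod>j<m - 1. x (is ! j)) = (\<Prod>j\<in>set is. x j)"
      proof -
        have "(\<Prod>j\<in>set is. x j) = (\<Prod>j\<in>{..<length is}. x (is ! j))"
          using d by (intro prod.reindex_bij_betw[symmetric]) (simp add: bij_betw_nth lessThan_atLeast0)
        thus ?thesis using L by simp
      qed
      thus ?thesis using a st unfolding h_def by simp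
    qed
    have "(\<Sum>is\<in>{is\<in>S. g is = e}. h is) = (\<Sum>is\<in>permutations_of_set (e - {i}). 1 / of_nat (fact (m-1)) * (\<Prod>j\<in>e-{i}. x j))"
      unfolding eq using hv by (intro sum.cong) auto
    also have "\<dots> = (\<Prod>j\<in>e-{i}. x j)"
      using card_minus[OF eE ie] edge_fin[OF eE] by simp
    finally show "(\<Sum>is\<in>{is\<in>S. g is = e}. h is) = (\<Prod>j\<in>e-{i}. x j)" .
  qed
  finally show ?thesis .
qed

lemma deg_apply:
  assumes i: "i < n"
  shows "tensor_apply m n (deg_tensor m n E) x i = of_nat (hg_degree E i) * x i ^ (m-1)"
proof -
  have r: "replicate (m-1) i \<in> idx (m-1) n" unfolding idx_def using i by auto
  have "tensor_apply m n (deg_tensor m n E) x i =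
      (\<Sum>is\<in>{replicate (m-1) i}. deg_tensor m n E (i # is) * (\<Prod>j<m - 1. x (is ! j)))"
    unfolding tensor_apply_def
  proof (rule sum.mono_neutral_right)
    show "finite (idx (m - 1) n)" by (rule finite_idx)
    show "{replicate (m - 1) i} \<subseteq> idx (m - 1) n" using r by simp
    show "\<forall>is\<in>idx (m - 1) n - {replicate (m - 1) i}.
       deg_tensor m n E (i # is) * (\<Prod>j<m - 1. x (is ! j)) = 0"
    proof
      fix "is" assume "is \<in> idx (m - 1) n - {replicate (m - 1) i}"
      hence L: "length is = m - 1" and ne: "is \<noteq> replicate (m-1) i" unfolding idx_def by auto
      have "\<not> (\<exists>i'<n. i # is = replicate m i')"
      proof
        assume "\<exists>i'<n. i # is = replicate m i'"
        then obtain i' where "i # is = replicate m i'" by auto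
        moreover have "replicate m i' = i' # replicate (m-1) i'" using m2
          by (metis Suc_diff_1 less_le_trans pos2 replicate_Suc)
        ultimately show False using ne by auto
      qed
      thus "deg_tensor m n E (i # is) * (\<Prod>j<m - 1. x (is ! j)) = 0"
        unfolding deg_tensor_def by auto
    qed
  qed
  also have "\<dots> = of_nat (hg_degree E i) * x i ^ (m-1)"
  proof -
    have "i # replicate (m-1) i = replicate m i" using m2
      by (metis Suc_diff_1 less_le_trans pos2 replicate_Suc)
    moreover have "hd (replicate m i) = i" using m2 by (cases m) auto
    ultimately show ?thesis unfolding deg_tensor_def using i by auto
  qed
  finally show ?thesis .
qed

lemma apply_add: "tensor_apply m n (\<lambda>is. S is + T is) x i = tensor_apply m n S x i + tensor_apply m n T x i"
  unfolding tensor_apply_def by (simp add: distrib_right sum.distrib)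
lemma apply_diff: "tensor_apply m n (\<lambda>is. S is - T is) x i = tensor_apply m n S x i - tensor_apply m n T x i"
  unfolding tensor_apply_def by (simp add: left_diff_distrib sum_subtractf)

lemma Q_apply: "i < n \<Longrightarrow> tensor_apply m n (slap_tensor m n E) x i =
   of_nat (hg_degree E i) * x i ^ (m-1) + (\<Sum>e\<in>Ei i. \<Prod>j\<in>e-{i}. x j)"
  using apply_add[of "deg_tensor m n E" "adj_tensor m n E"] deg_apply adj_apply
  unfolding slap_tensor_def[abs_def] by simp

lemma L_apply: "i < n \<Longrightarrow> tensor_apply m n (lap_tensor m n E) x i =
   of_nat (hg_degree E i) * x i ^ (m-1) - (\<Sum>e\<in>Ei i. \<Prod>j\<in>e-{i}. x j)"
  using apply_diff[of "deg_tensor m n E" "adj_tensor m n E"] deg_apply adj_apply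
  unfolding lap_tensor_def[abs_def] by simp

lemma apply_scale: "tensor_apply m n T (\<lambda>j. c * x j) i = c ^ (m-1) * tensor_apply m n T x i"
  unfolding tensor_apply_def by (simp add: prod.distrib sum_distrib_left mult_ac)

end


context hg begin

definition stabC :: "(nat \<Rightarrow> complex) \<Rightarrow> bool" where
  "stabC d \<longleftrightarrow> (\<forall>e\<in>E. \<forall>i\<in>e. (\<Prod>j\<in>e-{i}. d j) = d i ^ (m-1))"

definition Sset where
  "Sset = {d :: nat \<Rightarrow> complex. (\<forall>i<n. d i \<noteq> 0) \<and> (\<forall>i\<ge>n. d i = 0) \<and> d 0 = 1 \<and> stabC d}"

lemma prod_nth_set:
  assumes "distinct xs"
  shows "(\<Prod>j<length xs. f (xs ! j)) = (\<Prod>v\<in>set xs. f v)"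
proof -
  have "(\<Prod>v\<in>set xs. f v) = (\<Prod>j\<in>{..<length xs}. f (xs ! j))"
    using assms by (intro prod.reindex_bij_betw[symmetric]) (simp add: bij_betw_nth lessThan_atLeast0)
  thus ?thesis by simp
qed

lemma prod_tail:
  assumes d: "distinct is" and L: "length is = m"
  shows "(\<Prod>j\<in>{1..<m}. f (is ! j)) = (\<Prod>v\<in>set is - {is ! 0}. f v)"
proof -
  obtain a xs where isd: "is = a # xs" using L m2 by (cases "is") auto
  have Lx: "length xs = m - 1" using L isd by simp
  have "{1..<m} = Suc ` {..<m-1}" using m2
    by (simp add: image_Suc_lessThan) (auto)
  hence "(\<Prod>j\<in>{1..<m}. f (is ! j)) = (\<Prod>j<m-1. f (xs ! j))"
    by (simp add: prod.reindex isd)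
  also have "\<dots> = (\<Prod>v\<in>set xs. f v)" using prod_nth_set[of xs f] d isd Lx by simp
  also have "set xs = set is - {is ! 0}" using d isd by auto
  finally show ?thesis .
qed

lemma stab_cond_iff:
  assumes dnz: "\<forall>i<n. d i \<noteq> 0"
    and TE: "\<forall>is\<in>idx m n. set is \<in> E \<longrightarrow> T is = c"
    and c: "c \<noteq> 0"
    and Tn: "\<forall>is\<in>idx m n. set is \<notin> E \<longrightarrow> T is = 0 \<or> (\<exists>i<n. is = replicate m i)"
  shows "(\<forall>is\<in>idx m n. T is = inverse (d (is!0)) ^ (m-1) * T is * (\<Prod>j\<in>{1..<m}. d (is ! j)))
         \<longleftrightarrow> stabC d" (is "?L \<longleftrightarrow> ?R")
proof
  assume L: ?L
  show ?R unfolding stabC_def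
  proof (intro ballI)
    fix e i assume eE: "e \<in> E" and ie: "i \<in> e"
    obtain xs where xs: "set xs = e - {i}" "distinct xs"
      using finite_distinct_list[of "e - {i}"] edge_fin[OF eE] by auto
    have Lx: "length xs = m - 1" using distinct_card[OF xs(2)] xs(1) card_minus[OF eE ie] by simp
    define "is" where "is = i # xs"
    have st: "set is = e" using xs ie unfolding is_def by auto
    have dis: "distinct is" using xs unfolding is_def by auto
    have Li: "length is = m" using Lx m2 unfolding is_def by simp
    have ii: "is \<in> idx m n" using st Li edge_sub[OF eE] unfolding idx_def by auto
    have "c = inverse (d i) ^ (m-1) * c * (\<Prod>v\<in>e - {i}. d v)"
      using L ii TE st eE prod_tail[OF dis Li, of d] unfolding is_def by auto
    hence "1 = inverse (d i) ^ (m-1) * (\<Prod>v\<in>e - {i}. d v)" using c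
      by (metis mult.assoc mult.commute mult_cancel_left1)
    moreover have "d i \<noteq> 0" using dnz edge_sub[OF eE] ie by auto
    ultimately show "(\<Prod>j\<in>e-{i}. d j) = d i ^ (m-1)"
      by (simp add: field_simps power_inverse)
  qed
next
  assume R: ?R
  show ?L
  proof
    fix "is" assume ii: "is \<in> idx m n"
    have Li: "length is = m" and sub: "set is \<subseteq> {0..<n}" using ii unfolding idx_def by auto
    have i0: "is ! 0 \<in> set is" using Li m2 by auto
    hence i0n: "is ! 0 < n" using sub by auto
    show "T is = inverse (d (is!0)) ^ (m-1) * T is * (\<Prod>j\<in>{1..<m}. d (is ! j))"
    proof (cases "set is \<in> E")
      case True
      have "card (set is) = length is" using edge_card[OF True] Li by simp
      hence dis: "distinct is" by (metis card_distinct)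
      have "(\<Prod>j\<in>{1..<m}. d (is ! j)) = d (is!0) ^ (m-1)"
        using prod_tail[OF dis Li, of d] R True i0 unfolding stabC_def by auto
      thus ?thesis using dnz i0n by (simp add: power_inverse field_simps)
    next
      case False
      then consider "T is = 0" | i where "i < n" "is = replicate m i" using Tn ii by blast
      thus ?thesis
      proof cases
        case 2
        have "(\<Prod>j\<in>{1..<m}. d (is ! j)) = (\<Prod>j\<in>{1..<m}. d i)"
          using 2 by (intro prod.cong) auto
        also have "\<dots> = d i ^ (m-1)" by simp
        finally show ?thesis using 2 dnz m2 by (simp add: power_inverse field_simps)
      qed simp
    qed
  qed
qed

lemma replicate_not_edge: "set (replicate m i) \<notin> E"
proof
  assume "set (replicate m i) \<in> E"
  moreover have "set (replicate m i) = {i}" using m2 by simp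
  ultimately show False using edge_card m2 by fastforce
qed

lemma stab_set_eq:
  assumes TE: "\<forall>is\<in>idx m n. set is \<in> E \<longrightarrow> T is = c"
    and c: "c \<noteq> 0"
    and Tn: "\<forall>is\<in>idx m n. set is \<notin> E \<longrightarrow> T is = 0 \<or> (\<exists>i<n. is = replicate m i)"
  shows "stab_index m n T = card Sset"
proof -
  have "{d :: nat \<Rightarrow> complex.
     (\<forall>i<n. d i \<noteq> 0) \<and> (\<forall>i\<ge>n. d i = 0) \<and> d 0 = 1 \<and>
     (\<forall>is\<in>idx m n. T is = inverse (d (is ! 0)) ^ (m - 1) * T is * (\<Prod>j\<in>{1..<m}. d (is ! j)))} = Sset"
    unfolding Sset_def using stab_cond_iff[OF _ TE c Tn] by blast
  thus ?thesis unfolding stab_index_def by simp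
qed

lemma deg_zero_edge: "is \<in> idx m n \<Longrightarrow> set is \<in> E \<Longrightarrow> deg_tensor m n E is = 0"
  unfolding deg_tensor_def using replicate_not_edge by auto

lemma deg_nonrep: "is \<in> idx m n \<Longrightarrow> deg_tensor m n E is = 0 \<or> (\<exists>i<n. is = replicate m i)"
  unfolding deg_tensor_def by auto

lemma fact_nz: "(1::complex) / of_nat (fact (m-1)) \<noteq> 0" by simp

lemma stab_A: "stab_index m n (adj_tensor m n E) = card Sset"
  by (rule stab_set_eq[OF _ fact_nz]) (auto simp: adj_tensor_def)

lemma stab_Q: "stab_index m n (slap_tensor m n E) = card Sset"
  by (rule stab_set_eq[OF _ fact_nz]) (auto simp: slap_tensor_def adj_tensor_def deg_zero_edge dest: deg_nonrep)

lemma stab_L: "stab_index m n (lap_tensor m n E) = card Sset"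
proof (rule stab_set_eq[of _ "- (1 / of_nat (fact (m-1)))"])
qed (auto simp: lap_tensor_def adj_tensor_def deg_zero_edge dest: deg_nonrep)

end


definition VecZ :: "nat \<Rightarrow> nat \<Rightarrow> (nat \<Rightarrow> int) set" where
  "VecZ m n = {f. (\<forall>i<n. 0 \<le> f i \<and> f i < int m) \<and> (\<forall>i\<ge>n. f i = 0)}"

definition mulv :: "nat \<Rightarrow> nat \<Rightarrow> (nat \<Rightarrow> nat \<Rightarrow> int) \<Rightarrow> (nat \<Rightarrow> int) \<Rightarrow> nat \<Rightarrow> int" where
  "mulv m n Q y = (\<lambda>j. if j < n then (\<Sum>b<n. Q j b * y b) mod int m else 0)"

lemma sum_mod_cong:
  assumes "\<And>x. x \<in> A \<Longrightarrow> f x mod M = g x mod M"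
  shows "(\<Sum>x\<in>A. f x) mod M = (\<Sum>x\<in>A. g x) mod (M::int)"
proof -
  have "(\<Sum>x\<in>A. f x) mod M = (\<Sum>x\<in>A. f x mod M) mod M" by (simp add: mod_sum_eq)
  also have "\<dots> = (\<Sum>x\<in>A. g x mod M) mod M" using assms by (metis (no_types, lifting) sum.cong)
  also have "\<dots> = (\<Sum>x\<in>A. g x) mod M" by (simp add: mod_sum_eq)
  finally show ?thesis .
qed

lemma mat_assoc_mod:
  "(\<Sum>b<n. A j b * ((\<Sum>c<n'. C b c * y c) mod M)) mod M
   = (\<Sum>c<n'. (\<Sum>b<n. A j b * C b c) * y c) mod (M::int)"
proof -
  have "(\<Sum>b<n. A j b * ((\<Sum>c<n'. C b c * y c) mod M)) mod M
      = (\<Sum>b<n. A j b * (\<Sum>c<n'. C b c * y c)) mod M"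
    by (rule sum_mod_cong) (simp add: mod_mult_right_eq)
  also have "(\<Sum>b<n. A j b * (\<Sum>c<n'. C b c * y c)) = (\<Sum>c<n'. (\<Sum>b<n. A j b * C b c) * y c)"
    by (simp add: sum_distrib_left sum_distrib_right sum.swap[of _ "{..<n}"] mult_ac)
  finally show ?thesis .
qed

lemma delta_sum_mod:
  assumes "\<And>c. c < n \<Longrightarrow> D c mod M = (if j = c then 1 else 0) mod M" and "j < (n::nat)"
  shows "(\<Sum>c<n. D c * y c) mod M = y j mod (M::int)"
proof -
  have "(\<Sum>c<n. D c * y c) mod M = (\<Sum>c<n. (if j = c then 1 else 0) * y c) mod M"
    using assms(1) by (intro sum_mod_cong) (metis lessThan_iff mod_mult_left_eq)
  also have "(\<Sum>c<n. (if j = c then 1 else 0) * y c) = (\<Sum>c<n. if j = c then y c else 0)"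
    by (intro sum.cong) auto
  also have "\<dots> = y j" using assms(2) sum.delta'[of "{..<n}" j y] by simp
  finally show ?thesis .
qed

lemma mulv_inv:
  assumes inv: "\<forall>i<n. \<forall>j<n. (\<Sum>l<n. Q' i l * Q l j) mod int m = (if i = j then 1 else 0) mod int m"
    and y: "y \<in> VecZ m n" and m: "m \<ge> 1"
  shows "mulv m n Q' (mulv m n Q y) = y"
proof
  fix j
  show "mulv m n Q' (mulv m n Q y) j = y j"
  proof (cases "j < n")
    case True
    have "mulv m n Q' (mulv m n Q y) j = (\<Sum>b<n. Q' j b * ((\<Sum>c<n. Q b c * y c) mod int m)) mod int m"
      unfolding mulv_def using True by simp
    also have "\<dots> = (\<Sum>c<n. (\<Sum>b<n. Q' j b * Q b c) * y c) mod int m" by (rule mat_assoc_mod)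
    also have "\<dots> = y j mod int m" using inv True by (intro delta_sum_mod) auto
    also have "\<dots> = y j" using y True unfolding VecZ_def by simp
    finally show ?thesis .
  next
    case False thus ?thesis using y unfolding mulv_def VecZ_def by simp
  qed
qed

lemma mulv_Vec: "m \<ge> 1 \<Longrightarrow> mulv m n Q y \<in> VecZ m n"
  unfolding mulv_def VecZ_def by auto

lemma finite_VecZ: "finite (VecZ m n)"
proof -
  have "VecZ m n \<subseteq> (\<lambda>g i. if i < n then g i else 0) ` (PiE {..<n} (\<lambda>_. {0..<int m}))"
  proof
    fix f assume f: "f \<in> VecZ m n"
    have "f = (\<lambda>i. if i < n then restrict f {..<n} i else 0)" using f unfolding VecZ_def by (intro ext) (auto simp: restrict_def)
    moreover have "restrict f {..<n} \<in> PiE {..<n} (\<lambda>_. {0..<int m})" using f unfolding VecZ_def by auto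
    ultimately show "f \<in> (\<lambda>g i. if i < n then g i else 0) ` (PiE {..<n} (\<lambda>_. {0..<int m}))" by blast
  qed
  thus ?thesis by (rule finite_subset) (intro finite_imageI finite_PiE; simp)
qed

lemma card_VecZ_prod:
  assumes "\<And>i. i < n \<Longrightarrow> A i \<subseteq> {0..<int m}"
  shows "card {f \<in> VecZ m n. \<forall>i<n. f i \<in> A i} = (\<Prod>i<n. card (A i))"
proof -
  have "bij_betw (\<lambda>f. restrict f {..<n}) {f \<in> VecZ m n. \<forall>i<n. f i \<in> A i} (PiE {..<n} A)"
  proof (rule bij_betw_byWitness[where f' = "\<lambda>(g::nat\<Rightarrow>int) i. if i < n then g i else 0"])
    show "\<forall>a\<in>{f \<in> VecZ m n. \<forall>i<n. f i \<in> A i}. (\<lambda>i. if i < n then restrict a {..<n} i else 0) = a"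
      unfolding VecZ_def by auto
    show "\<forall>a'\<in>PiE {..<n} A. restrict (\<lambda>i. if i < n then a' i else 0) {..<n} = a'"
      by (auto simp: PiE_def extensional_def restrict_def)
    show "(\<lambda>f. restrict f {..<n}) ` {f \<in> VecZ m n. \<forall>i<n. f i \<in> A i} \<subseteq> PiE {..<n} A" by (auto simp: PiE_def extensional_def)
    show "(\<lambda>g i. if i < n then g i else 0) ` PiE {..<n} A \<subseteq> {f \<in> VecZ m n. \<forall>i<n. f i \<in> A i}"
      using assms unfolding VecZ_def by (auto simp: PiE_def Pi_def) (fastforce+)
  qed
  hence "card {f \<in> VecZ m n. \<forall>i<n. f i \<in> A i} = card (PiE {..<n} A)" by (rule bij_betw_same_card)
  also have "\<dots> = (\<Prod>i<n. card (A i))" by (simp add: card_PiE)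
  finally show ?thesis .
qed

lemma card_mult_dvd:
  assumes "1 \<le> dd" "dd dvd int m" "m \<ge> 1"
  shows "card {y \<in> {0..<int m}. int m dvd dd * y} = nat dd"
proof -
  obtain q where q: "int m = dd * q" using assms(2) by (auto simp: dvd_def)
  have "0 < dd * q" using q assms(3) by simp
  hence qpos: "q > 0" using assms(1) zero_less_mult_pos by force
  have "{y \<in> {0..<int m}. int m dvd dd * y} = (\<lambda>t. q * t) ` {0..<dd}"
  proof safe
    fix y assume y: "y \<in> {0..<int m}" "int m dvd dd * y"
    hence "dd * q dvd dd * y" using q by simp
    hence "q dvd y" using assms(1) by simp
    then obtain t where t: "y = q * t" by (auto simp: dvd_def)
    have "0 \<le> t" using y t qpos by (simp add: zero_le_mult_iff)
    moreover have "t < dd" using y t q qpos by (simp add: mult.commute)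
    ultimately show "y \<in> (\<lambda>t. q * t) ` {0..<dd}" using t by auto
  next
    fix t assume "t \<in> {0..<dd}"
    thus "q * t \<in> {0..<int m}" using q qpos by (auto simp: mult.commute)
    show "int m dvd dd * (q * t)" using q by simp
  qed
  moreover have "inj_on (\<lambda>t. q * t) {0..<dd}" using qpos by (auto simp: inj_on_def)
  ultimately show ?thesis by (simp add: card_image)
qed

theorem snf_count:
  assumes snf: "has_snf_mod m k n B r d" and m: "m \<ge> 2"
  shows "card {f \<in> VecZ m n. \<forall>a<k. (\<Sum>v<n. B a v * f v) mod int m = 0}
         = nat (\<Prod>i<r. d i) * m ^ (n - r)"
proof -
  have rk: "r \<le> k" and rn: "r \<le> n" and dd: "\<forall>i<r. 1 \<le> d i \<and> d i \<le> int m - 1 \<and> d i dvd int m"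
    using snf unfolding has_snf_mod_def by auto
  obtain P Q where P: "invertible_mod m k P" and Q: "invertible_mod m n Q"
    and D: "\<forall>i<k. \<forall>j<n. (\<Sum>a<k. \<Sum>b<n. P i a * B a b * Q b j) mod int m =
                        (if i = j \<and> i < r then d i else 0) mod int m"
    using snf unfolding has_snf_mod_def by blast
  obtain P' where P': "\<forall>i<k. \<forall>j<k.
      (\<Sum>l<k. P i l * P' l j) mod int m = (if i = j then 1 else 0) mod int m \<and>
      (\<Sum>l<k. P' i l * P l j) mod int m = (if i = j then 1 else 0) mod int m"
    using P unfolding invertible_mod_def by blast
  obtain Q' where Q': "\<forall>i<n. \<forall>j<n.
      (\<Sum>l<n. Q i l * Q' l j) mod int m = (if i = j then 1 else 0) mod int m \<and>
      (\<Sum>l<n. Q' i l * Q l j) mod int m = (if i = j then 1 else 0) mod int m"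
    using Q unfolding invertible_mod_def by blast
  define Sol where "Sol = {f \<in> VecZ m n. \<forall>a<k. (\<Sum>v<n. B a v * f v) mod int m = 0}"
  define Y where "Y = {y \<in> VecZ m n. \<forall>i<n. y i \<in> {z \<in> {0..<int m}. i < r \<longrightarrow> int m dvd d i * z}}"
  have m1: "m \<ge> 1" using m by simp
  
  have Pcond: "(\<forall>a<k. (\<Sum>v<n. B a v * f v) mod int m = 0) \<longleftrightarrow>
        (\<forall>i<k. (\<Sum>a<k. P i a * (\<Sum>v<n. B a v * f v)) mod int m = 0)" for f
  proof
    assume h: "\<forall>a<k. (\<Sum>v<n. B a v * f v) mod int m = 0"
    show "\<forall>i<k. (\<Sum>a<k. P i a * (\<Sum>v<n. B a v * f v)) mod int m = 0"
    proof (intro allI impI)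
      fix i assume "i < k"
      have "(\<Sum>a<k. P i a * (\<Sum>v<n. B a v * f v)) mod int m = (\<Sum>a<k. P i a * 0) mod int m"
        using h by (intro sum_mod_cong) (metis lessThan_iff mod_mult_right_eq)
      thus "(\<Sum>a<k. P i a * (\<Sum>v<n. B a v * f v)) mod int m = 0" by simp
    qed
  next
    assume h: "\<forall>i<k. (\<Sum>a<k. P i a * (\<Sum>v<n. B a v * f v)) mod int m = 0"
    show "\<forall>a<k. (\<Sum>v<n. B a v * f v) mod int m = 0"
    proof (intro allI impI)
      fix a assume a: "a < k"
      define bf where "bf = (\<lambda>a. \<Sum>v<n. B a v * f v)"
      have "(\<Sum>l<k. P' a l * ((\<Sum>c<k. P l c * bf c) mod int m)) mod int m
          = (\<Sum>c<k. (\<Sum>l<k. P' a l * P l c) * bf c) mod int m" by (rule mat_assoc_mod)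
      also have "\<dots> = bf a mod int m" using P' a by (intro delta_sum_mod) auto
      finally have "bf a mod int m = (\<Sum>l<k. P' a l * ((\<Sum>c<k. P l c * bf c) mod int m)) mod int m" by simp
      also have "\<dots> = 0" using h unfolding bf_def by simp
      finally show "(\<Sum>v<n. B a v * f v) mod int m = 0" unfolding bf_def .
    qed
  qed
  
  have diag: "(\<Sum>a<k. P i a * (\<Sum>v<n. B a v * mulv m n Q y v)) mod int m
              = (if i < r then d i * y i else 0) mod int m" if i: "i < k" for i y
  proof -
    have "(\<Sum>a<k. P i a * (\<Sum>v<n. B a v * mulv m n Q y v))
        = (\<Sum>v<n. (\<Sum>a<k. P i a * B a v) * mulv m n Q y v)"
      by (simp add: sum_distrib_left sum_distrib_right sum.swap[of _ "{..<k}"] mult_ac)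
    also have "\<dots> = (\<Sum>v<n. (\<Sum>a<k. P i a * B a v) * ((\<Sum>c<n. Q v c * y c) mod int m))"
      unfolding mulv_def by simp
    finally have "(\<Sum>a<k. P i a * (\<Sum>v<n. B a v * mulv m n Q y v)) mod int m
        = (\<Sum>v<n. (\<Sum>a<k. P i a * B a v) * ((\<Sum>c<n. Q v c * y c) mod int m)) mod int m" by simp
    also have "\<dots> = (\<Sum>c<n. (\<Sum>v<n. (\<Sum>a<k. P i a * B a v) * Q v c) * y c) mod int m"
      by (rule mat_assoc_mod)
    also have "\<dots> = (\<Sum>c<n. (if i = c \<and> i < r then d i else 0) * y c) mod int m"
    proof (rule sum_mod_cong)
      fix c assume c: "c \<in> {..<n}"
      have "(\<Sum>v<n. (\<Sum>a<k. P i a * B a v) * Q v c) = (\<Sum>a<k. \<Sum>b<n. P i a * B a b * Q b c)"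
        by (simp add: sum_distrib_right sum.swap[of _ "{..<n}"])
      hence "(\<Sum>v<n. (\<Sum>a<k. P i a * B a v) * Q v c) mod int m = (if i = c \<and> i < r then d i else 0) mod int m"
        using D i c by simp
      thus "(\<Sum>v<n. (\<Sum>a<k. P i a * B a v) * Q v c) * y c mod int m = (if i = c \<and> i < r then d i else 0) * y c mod int m"
        by (metis mod_mult_left_eq)
    qed
    also have "(\<Sum>c<n. (if i = c \<and> i < r then d i else 0) * y c) = (\<Sum>c<n. if i = c then (if i < r then d i * y i else 0) else 0)"
      by (intro sum.cong) auto
    also have "\<dots> = (if i < r then d i * y i else 0)"
      using rn sum.delta'[of "{..<n}" i "\<lambda>_. if i < r then d i * y i else 0"] by auto
    finally show ?thesis .
  qed
  have bij: "bij_betw (mulv m n Q) Y Sol"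
  proof (rule bij_betw_byWitness[where f' = "mulv m n Q'"])
    show "\<forall>a\<in>Y. mulv m n Q' (mulv m n Q a) = a"
      using mulv_inv[of n Q' Q m] Q' m1 unfolding Y_def by auto
    show "\<forall>a'\<in>Sol. mulv m n Q (mulv m n Q' a') = a'"
      using mulv_inv[of n Q Q' m] Q' m1 unfolding Sol_def by auto
    show "mulv m n Q ` Y \<subseteq> Sol"
    proof safe
      fix y assume y: "y \<in> Y"
      have "\<forall>i<k. (\<Sum>a<k. P i a * (\<Sum>v<n. B a v * mulv m n Q y v)) mod int m = 0"
      proof (intro allI impI)
        fix i assume i: "i < k"
        show "(\<Sum>a<k. P i a * (\<Sum>v<n. B a v * mulv m n Q y v)) mod int m = 0"
          unfolding diag[OF i] using y rn unfolding Y_def by (auto simp: dvd_eq_mod_eq_0)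
      qed
      thus "mulv m n Q y \<in> Sol" unfolding Sol_def using Pcond mulv_Vec[OF m1] by blast
    qed
    show "mulv m n Q' ` Sol \<subseteq> Y"
    proof safe
      fix f assume f: "f \<in> Sol"
      define y where "y = mulv m n Q' f"
      have yV: "y \<in> VecZ m n" unfolding y_def by (rule mulv_Vec[OF m1])
      have fy: "mulv m n Q y = f" using mulv_inv[of n Q Q' m f] Q' m1 f unfolding Sol_def y_def by auto
      have h: "\<forall>i<k. (\<Sum>a<k. P i a * (\<Sum>v<n. B a v * f v)) mod int m = 0"
        using f Pcond unfolding Sol_def by blast
      have "int m dvd d i * y i" if "i < r" for i
      proof -
        have "i < k" using that rk by simp
        from h[rule_format, OF this] diag[OF this, of y] fy that show ?thesis
          by (simp add: dvd_eq_mod_eq_0)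
      qed
      thus "y \<in> Y" using yV unfolding Y_def VecZ_def by auto
    qed
  qed
  have "card Sol = card Y" using bij by (simp add: bij_betw_same_card)
  also have "card Y = (\<Prod>i<n. card {z \<in> {0..<int m}. i < r \<longrightarrow> int m dvd d i * z})"
    unfolding Y_def by (rule card_VecZ_prod) auto
  also have "\<dots> = (\<Prod>i<r. card {z \<in> {0..<int m}. i < r \<longrightarrow> int m dvd d i * z}) *
                  (\<Prod>i\<in>{r..<n}. card {z \<in> {0..<int m}. i < r \<longrightarrow> int m dvd d i * z})"
  proof -
    have "{..<n} = {..<r} \<union> {r..<n}" using rn by auto
    hence "(\<Prod>i<n. card {z \<in> {0..<int m}. i < r \<longrightarrow> int m dvd d i * z}) = (\<Prod>i\<in>{..<r} \<union> {r..<n}. card {z \<in> {0..<int m}. i < r \<longrightarrow> int m dvd d i * z})" by simp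
    also have "\<dots> = (\<Prod>i<r. card {z \<in> {0..<int m}. i < r \<longrightarrow> int m dvd d i * z}) *
                  (\<Prod>i\<in>{r..<n}. card {z \<in> {0..<int m}. i < r \<longrightarrow> int m dvd d i * z})"
      by (rule prod.union_disjoint) auto
    finally show ?thesis .
  qed
  also have "(\<Prod>i<r. card {z \<in> {0..<int m}. i < r \<longrightarrow> int m dvd d i * z}) = (\<Prod>i<r. nat (d i))"
    using dd card_mult_dvd m1 by (intro prod.cong) auto
  also have "(\<Prod>i\<in>{r..<n}. card {z \<in> {0..<int m}. i < r \<longrightarrow> int m dvd d i * z}) = m ^ (n - r)"
  proof -
    have c: "card {0..<int m} = m" by simp
    have "{z \<in> {0..<int m}. i < r \<longrightarrow> int m dvd d i * z} = {0..<int m}" if "i \<in> {r..<n}" for i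
      using that by auto
    hence "card {z \<in> {0..<int m}. i < r \<longrightarrow> int m dvd d i * z} = m" if "i \<in> {r..<n}" for i
      using that c by metis
    thus ?thesis by simp
  qed
  also have "(\<Prod>i<r. nat (d i)) = nat (\<Prod>i<r. d i)"
  proof -
    have "int (\<Prod>i<r. nat (d i)) = (\<Prod>i<r. int (nat (d i)))" by (simp add: of_nat_prod)
    also have "\<dots> = (\<Prod>i<r. d i)" using dd by (intro prod.cong) auto
    finally show ?thesis by (metis nat_int)
  qed
  finally show ?thesis unfolding Sol_def .
qed


definition om :: "nat \<Rightarrow> complex" where "om m = cis (2 * pi / real m)"

lemma om_pow: "om m ^ j = cis (2 * pi * real j / real m)"
  unfolding om_def Complex.DeMoivre by (simp add: field_simps)

lemma om_m: "m \<ge> 1 \<Longrightarrow> om m ^ m = 1"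
  unfolding om_pow by (simp add: complex_eq_iff)

lemma om_nz: "om m ^ j \<noteq> 0" unfolding om_pow by simp
lemma om_ne0: "om m \<noteq> 0" unfolding om_def by simp

lemma om_inj: assumes "m \<ge> 1" "a < m" "b < m" "om m ^ a = om m ^ b" shows "a = b"
proof -
  have "inj_on (\<lambda>k. cis (2 * pi * real k / real m)) {..<m}"
    using Complex.bij_betw_roots_unity[of m] assms(1) unfolding bij_betw_def by auto
  thus ?thesis using assms unfolding om_pow inj_on_def by auto
qed

lemma om_mod: "m \<ge> 1 \<Longrightarrow> om m ^ j = om m ^ (j mod m)"
proof -
  assume m: "m \<ge> 1"
  have "om m ^ j = om m ^ (m * (j div m) + j mod m)" by simp
  also have "\<dots> = (om m ^ m) ^ (j div m) * om m ^ (j mod m)" by (metis power_add power_mult)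
  finally show ?thesis using om_m[OF m] by simp
qed

lemma om_eq1: assumes "m \<ge> 1" shows "om m ^ j = 1 \<longleftrightarrow> m dvd j"
proof
  assume "om m ^ j = 1"
  hence "om m ^ (j mod m) = om m ^ 0" using om_mod[OF assms] by simp
  hence "j mod m = 0" using om_inj[OF assms] assms by (meson mod_less_divisor less_le_trans zero_less_one)
  thus "m dvd j" by auto
next
  assume "m dvd j"
  then obtain q where "j = m * q" by auto
  thus "om m ^ j = 1" using om_m[OF assms] by (simp add: power_mult)
qed

lemma om_root: assumes "m \<ge> 1" "z ^ m = 1" shows "\<exists>j<m. z = om m ^ j"
proof -
  have "z \<in> (\<lambda>k. cis (2 * pi * real k / real m)) ` {..<m}"
    using Complex.bij_betw_roots_unity[of m] assms unfolding bij_betw_def by auto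
  thus ?thesis unfolding om_pow by auto
qed

lemma om_half: assumes "even m" "m \<ge> 1" shows "om m ^ (m div 2) = -1"
proof -
  have "2 * pi * real (m div 2) / real m = pi" using assms
    by (auto simp: field_simps real_of_nat_div elim!: evenE)
  thus ?thesis unfolding om_pow by simp
qed

locale hgc = hg +
  assumes conn: "hg_connected n E" and n1: "n \<ge> 1"
begin

lemma m1: "m \<ge> 1" using m2 by simp

lemma conn_closed:
  assumes cl: "\<And>e a b. e \<in> E \<Longrightarrow> a \<in> e \<Longrightarrow> b \<in> e \<Longrightarrow> a \<in> P \<Longrightarrow> b \<in> P"
    and i0: "i0 \<in> P" "i0 < n" and v: "v < n"
  shows "v \<in> P"
proof -
  have "(i0, v) \<in> {(a, b). \<exists>e\<in>E. a \<in> e \<and> b \<in> e}\<^sup>*" using conn i0 v unfolding hg_connected_def by auto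
  thus ?thesis
  proof (induction rule: rtrancl_induct)
    case base thus ?case using i0 by simp
  next
    case (step y z) thus ?case using cl by auto
  qed
qed

lemma conn_const:
  assumes cl: "\<And>e a b. e \<in> E \<Longrightarrow> a \<in> e \<Longrightarrow> b \<in> e \<Longrightarrow> g a = g b" and v: "v < n"
  shows "g v = g 0"
proof -
  have "v \<in> {v. g v = g 0}"
  proof (rule conn_closed[of "{v. g v = g 0}" 0 v])
    fix e a b assume "e \<in> E" "a \<in> e" "b \<in> e" "a \<in> {v. g v = g 0}"
    thus "b \<in> {v. g v = g 0}" using cl[of e a b] by simp
  qed (use v n1 in auto)
  thus ?thesis by simp
qed

lemma prod_split: "e \<in> E \<Longrightarrow> a \<in> e \<Longrightarrow> (\<Prod>j\<in>e. x j) = x a * (\<Prod>j\<in>e-{a}. x j)"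
  using edge_fin by (simp add: prod.remove)

lemma edge_ne: assumes "e \<in> E" shows "\<exists>a. a \<in> e"
proof -
  have "card e \<noteq> 0" using edge_card[OF assms] m2 by simp
  hence "e \<noteq> {}" by (metis card.empty)
  thus ?thesis by auto
qed

lemma Sset_root: assumes d: "d \<in> Sset" and i: "i < n" shows "d i ^ m = 1"
proof -
  have st: "stabC d" and d0: "d 0 = 1" using d unfolding Sset_def by auto
  have pe: "(\<Prod>j\<in>e. d j) = d a ^ m" if "e \<in> E" "a \<in> e" for e a
  proof -
    have "(\<Prod>j\<in>e. d j) = d a * d a ^ (m-1)" using prod_split[OF that, of d] st that unfolding stabC_def by auto
    also have "\<dots> = d a ^ m" using m2 by (simp add: power_eq_if)
    finally show ?thesis .
  qed
  have "d i ^ m = d 0 ^ m"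
  proof (rule conn_const[where g = "\<lambda>v. d v ^ m", OF _ i])
    fix e a b assume "e \<in> E" "a \<in> e" "b \<in> e"
    thus "d a ^ m = d b ^ m" using pe by metis
  qed
  thus ?thesis using d0 by simp
qed

definition Fn where "Fn = {f \<in> VecZ m n. f 0 = 0 \<and> (\<forall>e\<in>E. int m dvd (\<Sum>v\<in>e. f v))}"
definition Phi where "Phi f = (\<lambda>i. if i < n then om m ^ nat (f i) else 0)"

lemma sum_nat_int: "(\<forall>v\<in>A. f v \<ge> 0) \<Longrightarrow> (\<Sum>v\<in>A. f v) = int (\<Sum>v\<in>A. nat (f v))"
  by (simp add: of_nat_sum)

lemma Phi_in: assumes f: "f \<in> Fn" shows "Phi f \<in> Sset"
proof -
  have fV: "\<forall>i<n. 0 \<le> f i \<and> f i < int m" "\<forall>i\<ge>n. f i = 0" and f0: "f 0 = 0"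
    and dv: "\<forall>e\<in>E. int m dvd (\<Sum>v\<in>e. f v)" using f unfolding Fn_def VecZ_def by auto
  have "stabC (Phi f)" unfolding stabC_def
  proof (intro ballI)
    fix e i assume e: "e \<in> E" and i: "i \<in> e"
    have en: "\<forall>v\<in>e. v < n" using edge_sub[OF e] by auto
    define s where "s = (\<Sum>j\<in>e-{i}. nat (f j))"
    define a where "a = nat (f i)"
    have "(\<Sum>v\<in>e. f v) = int (\<Sum>v\<in>e. nat (f v))" using fV en by (intro sum_nat_int) auto
    also have "(\<Sum>v\<in>e. nat (f v)) = a + s" unfolding a_def s_def using edge_fin[OF e] i by (simp add: sum.remove)
    finally have "m dvd a + s" using dv e by (metis int_dvd_int_iff)
    hence h1: "om m ^ a * om m ^ s = 1" using om_eq1[OF m1] by (metis power_add)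
    have "a + a * (m-1) = m * a" using m2 by (cases m) auto
    hence h2: "om m ^ a * om m ^ (a * (m-1)) = 1" using om_m[OF m1]
      by (metis power_add power_mult power_one)
    have h3: "om m ^ a * om m ^ s = om m ^ a * om m ^ (a * (m-1))" using h1 h2 by simp
    have "(\<Prod>j\<in>e-{i}. Phi f j) = (\<Prod>j\<in>e-{i}. om m ^ nat (f j))"
      using en unfolding Phi_def by (intro prod.cong) auto
    also have "\<dots> = om m ^ s" unfolding s_def by (simp add: power_sum)
    also have "\<dots> = om m ^ (a * (m-1))" using h3 om_nz[of m a] om_ne0[of m] by simp
    also have "\<dots> = Phi f i ^ (m-1)" using en i unfolding Phi_def a_def by (simp add: power_mult)
    finally show "(\<Prod>j\<in>e-{i}. Phi f j) = Phi f i ^ (m-1)" .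
  qed
  thus ?thesis unfolding Sset_def Phi_def using f0 n1 om_nz by auto
qed

lemma Phi_inj: "inj_on Phi Fn"
proof (rule inj_onI)
  fix f g assume f: "f \<in> Fn" and g: "g \<in> Fn" and eq: "Phi f = Phi g"
  show "f = g"
  proof
    fix i show "f i = g i"
    proof (cases "i < n")
      case True
      have "om m ^ nat (f i) = om m ^ nat (g i)" using eq True unfolding Phi_def by meson
      moreover have "nat (f i) < m" "nat (g i) < m" "f i \<ge> 0" "g i \<ge> 0"
        using f g True unfolding Fn_def VecZ_def by auto
      ultimately show ?thesis using om_inj[OF m1] by (metis eq_nat_nat_iff)
    next
      case False thus ?thesis using f g unfolding Fn_def VecZ_def by auto
    qed
  qed
qed

lemma Phi_surj: assumes d: "d \<in> Sset" shows "d \<in> Phi ` Fn"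
proof -
  have dnz: "\<forall>i<n. d i \<noteq> 0" and dn: "\<forall>i\<ge>n. d i = 0" and d0: "d 0 = 1"
    using d unfolding Sset_def by auto
  define f where "f = (\<lambda>i. if i < n then int (SOME j. j < m \<and> d i = om m ^ j) else 0)"
  have fs: "nat (f i) < m \<and> d i = om m ^ nat (f i)" "f i \<ge> 0" if "i < n" for i
  proof -
    have "\<exists>j<m. d i = om m ^ j" using om_root[OF m1 Sset_root[OF d that]] .
    hence "(SOME j. j < m \<and> d i = om m ^ j) < m \<and> d i = om m ^ (SOME j. j < m \<and> d i = om m ^ j)"
      by (rule someI_ex[where P = "\<lambda>j. j < m \<and> d i = om m ^ j"])
    thus "nat (f i) < m \<and> d i = om m ^ nat (f i)" "f i \<ge> 0" unfolding f_def using that by auto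
  qed
  have "f 0 = 0"
  proof -
    have "om m ^ nat (f 0) = om m ^ 0" using fs[of 0] n1 d0 by simp
    moreover have "nat (f 0) < m" using fs[of 0] n1 by simp
    ultimately have "nat (f 0) = 0" using om_inj[OF m1, of "nat (f 0)" 0] m1 by simp
    thus ?thesis using fs(2)[of 0] n1 by simp
  qed
  moreover have "f \<in> VecZ m n" unfolding VecZ_def using fs by (auto simp: f_def)
  moreover have "int m dvd (\<Sum>v\<in>e. f v)" if e: "e \<in> E" for e
  proof -
    have en: "\<forall>v\<in>e. v < n" using edge_sub[OF e] by auto
    obtain a where a: "a \<in> e" using edge_ne[OF e] by auto
    have "om m ^ (\<Sum>v\<in>e. nat (f v)) = (\<Prod>v\<in>e. om m ^ nat (f v))" by (simp add: power_sum)
    also have "\<dots> = (\<Prod>v\<in>e. d v)" using fs en by (intro prod.cong) auto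
    also have "\<dots> = d a * (\<Prod>v\<in>e-{a}. d v)" by (rule prod_split[OF e a])
    also have "\<dots> = d a * d a ^ (m-1)" using d e a unfolding Sset_def stabC_def by auto
    also have "\<dots> = d a ^ m" using m2 by (simp add: power_eq_if)
    also have "\<dots> = 1" using Sset_root[OF d] en a by auto
    finally have "m dvd (\<Sum>v\<in>e. nat (f v))" using om_eq1[OF m1] by simp
    moreover have "(\<Sum>v\<in>e. f v) = int (\<Sum>v\<in>e. nat (f v))" using fs en by (intro sum_nat_int) auto
    ultimately show ?thesis by (metis int_dvd_int_iff)
  qed
  ultimately have fF: "f \<in> Fn" unfolding Fn_def by auto
  have "Phi f = d"
  proof
    fix i show "Phi f i = d i" using fs dn unfolding Phi_def by auto
  qed
  thus ?thesis using fF by blast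
qed

lemma card_Sset_Fn: "card Sset = card Fn"
proof -
  have "bij_betw Phi Fn Sset" unfolding bij_betw_def using Phi_inj Phi_in Phi_surj by blast
  thus ?thesis by (simp add: bij_betw_same_card)
qed

definition Soln where "Soln = {f \<in> VecZ m n. \<forall>e\<in>E. int m dvd (\<Sum>v\<in>e. f v)}"

lemma sum_shift_mod:
  assumes e: "e \<in> E"
  shows "(\<Sum>v\<in>e. (g v + c) mod int m) mod int m = (\<Sum>v\<in>e. g v) mod int m"
proof -
  have "(\<Sum>v\<in>e. (g v + c) mod int m) mod int m = (\<Sum>v\<in>e. g v + c) mod int m"
    by (simp add: mod_sum_eq)
  also have "(\<Sum>v\<in>e. g v + c) = (\<Sum>v\<in>e. g v) + int m * c"
    using edge_card[OF e] by (simp add: sum.distrib)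
  finally show ?thesis by simp
qed

lemma card_Soln: "card Soln = m * card Fn"
proof -
  define F where "F = (\<lambda>(c::int, g::nat\<Rightarrow>int). (\<lambda>i. if i < n then (g i + c) mod int m else 0))"
  define G where "G = (\<lambda>f::nat\<Rightarrow>int. (f 0, (\<lambda>i. if i < n then (f i - f 0) mod int m else 0)))"
  have "bij_betw F ({0..<int m} \<times> Fn) Soln"
  proof (rule bij_betw_byWitness[where f' = G])
    show "\<forall>a\<in>{0..<int m} \<times> Fn. G (F a) = a"
    proof
      fix a assume a: "a \<in> {0..<int m} \<times> Fn"
      obtain c g where cg: "a = (c, g)" by fastforce
      have c: "0 \<le> c" "c < int m" and g: "g \<in> Fn" using a cg by auto
      have gV: "\<forall>i<n. 0 \<le> g i \<and> g i < int m" "\<forall>i\<ge>n. g i = 0" "g 0 = 0" using g unfolding Fn_def VecZ_def by auto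
      have F0: "F a 0 = c" using n1 c gV unfolding F_def cg by simp
      have "(\<lambda>i. if i < n then (F a i - F a 0) mod int m else 0) = g"
      proof
        fix i show "(if i < n then (F a i - F a 0) mod int m else 0) = g i"
          using gV F0 unfolding F_def cg by (auto simp: mod_diff_left_eq)
      qed
      thus "G (F a) = a" unfolding G_def using F0 cg by simp
    qed
    show "\<forall>a'\<in>Soln. F (G a') = a'"
    proof
      fix f assume f: "f \<in> Soln"
      have fV: "\<forall>i<n. 0 \<le> f i \<and> f i < int m" "\<forall>i\<ge>n. f i = 0" using f unfolding Soln_def VecZ_def by auto
      show "F (G f) = f"
      proof
        fix i show "F (G f) i = f i" using fV unfolding F_def G_def by (auto simp: mod_add_left_eq)
      qed
    qed
    show "F ` ({0..<int m} \<times> Fn) \<subseteq> Soln"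
    proof (rule image_subsetI)
      fix x assume "x \<in> {0..<int m} \<times> Fn"
      then obtain c g where x: "x = (c, g)" and c: "c \<in> {0..<int m}" and g: "g \<in> Fn" by auto
      have dv: "\<forall>e\<in>E. int m dvd (\<Sum>v\<in>e. g v)" using g unfolding Fn_def by auto
      have "int m dvd (\<Sum>v\<in>e. F (c, g) v)" if e: "e \<in> E" for e
      proof -
        have "(\<Sum>v\<in>e. F (c, g) v) = (\<Sum>v\<in>e. (g v + c) mod int m)"
          using edge_sub[OF e] unfolding F_def by (intro sum.cong) auto
        hence "(\<Sum>v\<in>e. F (c, g) v) mod int m = (\<Sum>v\<in>e. g v) mod int m" using sum_shift_mod[OF e] by simp
        thus ?thesis using dv e by (simp add: dvd_eq_mod_eq_0)
      qed
      moreover have "F (c, g) \<in> VecZ m n" unfolding VecZ_def F_def using m1 by auto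
      ultimately show "F x \<in> Soln" unfolding Soln_def x by auto
    qed
    show "G ` Soln \<subseteq> {0..<int m} \<times> Fn"
    proof (rule image_subsetI)
      fix f assume f: "f \<in> Soln"
      have fV: "\<forall>i<n. 0 \<le> f i \<and> f i < int m" "\<forall>i\<ge>n. f i = 0" and dv: "\<forall>e\<in>E. int m dvd (\<Sum>v\<in>e. f v)"
        using f unfolding Soln_def VecZ_def by auto
      have A: "fst (G f) \<in> {0..<int m}" using fV n1 unfolding G_def by auto
      define g where "g = snd (G f)"
      have "int m dvd (\<Sum>v\<in>e. g v)" if e: "e \<in> E" for e
      proof -
        have "(\<Sum>v\<in>e. g v) = (\<Sum>v\<in>e. (f v + (- f 0)) mod int m)"
          using edge_sub[OF e] unfolding g_def G_def by (intro sum.cong) auto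
        hence "(\<Sum>v\<in>e. g v) mod int m = (\<Sum>v\<in>e. f v) mod int m" using sum_shift_mod[OF e, of f "- f 0"] by simp
        thus ?thesis using dv e by (simp add: dvd_eq_mod_eq_0)
      qed
      moreover have "g \<in> VecZ m n" unfolding VecZ_def g_def G_def using m1 by auto
      moreover have "g 0 = 0" unfolding g_def G_def using n1 by simp
      ultimately have "snd (G f) \<in> Fn" unfolding Fn_def g_def by auto
      thus "G f \<in> {0..<int m} \<times> Fn" using A by (simp add: mem_Times_iff)
    qed
  qed
  hence "card Soln = card ({0..<int m} \<times> Fn)" by (simp add: bij_betw_same_card)
  also have "\<dots> = m * card Fn" by (simp add: card_cartesian_product)
  finally show ?thesis .
qed

end


context hgc begin

lemma Soln_eq:
  assumes eb: "bij_betw e {0..<k} E"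
  shows "Soln = {f \<in> VecZ m n. \<forall>a<k. (\<Sum>v<n. incidence e a v * f v) mod int m = 0}"
proof -
  have s: "(\<Sum>v<n. incidence e a v * f v) = (\<Sum>v\<in>e a. f v)" if a: "a < k" for a f
  proof -
    have ea: "e a \<in> E" using eb a unfolding bij_betw_def by auto
    have "(\<Sum>v<n. incidence e a v * f v) = (\<Sum>v<n. if v \<in> e a then f v else 0)"
      unfolding incidence_def by (intro sum.cong) auto
    also have "\<dots> = (\<Sum>v\<in>{..<n} \<inter> e a. f v)" by (simp add: sum.inter_restrict)
    also have "{..<n} \<inter> e a = e a" using edge_sub[OF ea] by auto
    finally show ?thesis .
  qed
  have EE: "E = e ` {0..<k}" using eb unfolding bij_betw_def by auto
  show ?thesis unfolding Soln_def using s EE by (auto simp: dvd_eq_mod_eq_0)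
qed

lemma stab_formula:
  assumes eb: "bij_betw e {0..<k} E" and snf: "has_snf_mod m k n (incidence e) r d"
  shows "real (card Sset) = real m powi (int n - 1 - int r) * (\<Prod>i<r. real_of_int (d i))"
proof -
  have rn: "r \<le> n" and dd: "\<forall>i<r. 1 \<le> d i" using snf unfolding has_snf_mod_def by auto
  have "m * card Sset = nat (\<Prod>i<r. d i) * m ^ (n - r)"
    using card_Soln card_Sset_Fn Soln_eq[OF eb] snf_count[OF snf m2] by simp
  hence "real m * real (card Sset) = real (nat (\<Prod>i<r. d i)) * real m ^ (n - r)"
    by (metis of_nat_mult of_nat_power)
  moreover have "real (nat (\<Prod>i<r. d i)) = (\<Prod>i<r. real_of_int (d i))"
  proof -
    have "(\<Prod>i<r. d i) \<ge> 0" using dd by (intro prod_nonneg) (auto intro: order_trans[of 0 1])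
    hence "real (nat (\<Prod>i<r. d i)) = real_of_int (\<Prod>i<r. d i)" by simp
    thus ?thesis by simp
  qed
  ultimately have h: "real (card Sset) = (\<Prod>i<r. real_of_int (d i)) * real m ^ (n - r) / real m"
    using m2 by (simp add: field_simps)
  have "real m powi (int n - 1 - int r) = real m powi (int (n - r) - 1)"
    using rn by (simp add: of_nat_diff algebra_simps)
  also have "\<dots> = real m ^ (n - r) / real m"
    using m2 by (subst power_int_diff) auto
  finally show ?thesis using h by simp
qed

end


context hgc begin

definition Fr :: "(nat \<Rightarrow> real) \<Rightarrow> real" where
  "Fr x = (\<Sum>i<n. real (hg_degree E i) * x i ^ m) + real m * (\<Sum>e\<in>E. \<Prod>j\<in>e. x j)"
definition Nr :: "(nat \<Rightarrow> real) \<Rightarrow> real" where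
  "Nr x = (\<Sum>i<n. x i ^ m)"
definition Kset :: "(nat \<Rightarrow> real) set" where
  "Kset = {x. (\<forall>i<n. 0 \<le> x i \<and> x i \<le> 1) \<and> (\<forall>i\<ge>n. x i = 0) \<and> Nr x = 1}"

lemma cont_Fr: "continuous_on S Fr"
  unfolding Fr_def
  by (intro continuous_intros continuous_on_product_then_coordinatewise continuous_on_id)

lemma cont_Nr: "continuous_on S Nr"
  unfolding Nr_def
  by (intro continuous_intros continuous_on_product_then_coordinatewise continuous_on_id)

lemma compact_Kset: "compact Kset"
proof -
  define S where "S = (\<lambda>i::nat. if i < n then {0..1::real} else {0})"
  have "compactin (product_topology (\<lambda>_. euclidean) UNIV) (PiE UNIV S)"
    by (subst compactin_PiE) (auto simp: S_def)
  hence c: "compact (PiE UNIV S)" by (simp add: euclidean_product_topology)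
  have "Kset = PiE UNIV S \<inter> {x. Nr x = 1}"
    unfolding Kset_def S_def by (auto simp: PiE_iff split: if_splits)
  moreover have "closed {x. Nr x = 1}"
    using cont_Nr by (intro closed_Collect_eq) (auto intro: continuous_intros)
  ultimately show ?thesis using c by (simp add: compact_Int_closed)
qed

lemma Kset_ne: "(\<lambda>i. if i = 0 then 1 else 0) \<in> Kset"
proof -
  have "Nr (\<lambda>i. if i = 0 then 1 else 0) = (\<Sum>i<n. if i = 0 then 1 else 0)" unfolding Nr_def using m2
    by (intro sum.cong) auto
  also have "\<dots> = 1" using n1 sum.delta[of "{..<n}" 0 "\<lambda>_. 1::real"] by simp
  finally have "Nr (\<lambda>i. if i = 0 then 1 else 0) = 1" .
  thus ?thesis unfolding Kset_def using n1 by auto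
qed

lemma max_exists: "\<exists>x\<in>Kset. \<forall>y\<in>Kset. Fr y \<le> Fr x"
  using continuous_attains_sup[OF compact_Kset _ cont_Fr] Kset_ne by blast

lemma Fr_scale: "Fr (\<lambda>i. c * x i) = c ^ m * Fr x"
proof -
  have "(\<Sum>e\<in>E. \<Prod>j\<in>e. c * x j) = (\<Sum>e\<in>E. c ^ m * (\<Prod>j\<in>e. x j))"
    using edge_card by (intro sum.cong) (auto simp: prod.distrib)
  moreover have "(\<Sum>i<n. real (hg_degree E i) * (c * x i) ^ m) = c ^ m * (\<Sum>i<n. real (hg_degree E i) * x i ^ m)"
    by (simp add: power_mult_distrib sum_distrib_left mult_ac)
  ultimately show ?thesis unfolding Fr_def
    by (simp add: sum_distrib_left distrib_left mult_ac)
qed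

lemma Nr_scale: "Nr (\<lambda>i. c * x i) = c ^ m * Nr x"
  unfolding Nr_def by (simp add: power_mult_distrib sum_distrib_left)

lemma Nr_nonneg: "(\<forall>i. 0 \<le> x i) \<Longrightarrow> 0 \<le> Nr x"
  unfolding Nr_def by (auto intro!: sum_nonneg)

lemma Fr_nonneg: "(\<forall>i. 0 \<le> x i) \<Longrightarrow> 0 \<le> Fr x"
  unfolding Fr_def by (auto intro!: sum_nonneg add_nonneg_nonneg mult_nonneg_nonneg prod_nonneg)

lemma Nr_zero:
  assumes nn: "\<forall>i. 0 \<le> x i" and z: "Nr x = 0" and i: "i < n"
  shows "x i = 0"
proof -
  have "\<forall>j\<in>{..<n}. x j ^ m = 0"
    using z nn unfolding Nr_def by (subst sum_nonneg_eq_0_iff[symmetric]) auto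
  thus ?thesis using i m2 by auto
qed

lemma key_ineq:
  assumes xK: "x \<in> Kset" and mx: "\<forall>y\<in>Kset. Fr y \<le> Fr x"
    and nn: "\<forall>i. 0 \<le> y i" and sup: "\<forall>i\<ge>n. y i = 0"
  shows "Fr y \<le> Fr x * Nr y"
proof (cases "Nr y = 0")
  case True
  have y0: "y i = 0" for i using Nr_zero[OF nn True] sup by (cases "i < n") auto
  have m0: "0 < m" using m2 by simp
  have "Fr y = 0" unfolding Fr_def using y0 m0 edge_card
    by (simp add: zero_power)
  thus ?thesis using True by simp
next
  case False
  hence Np: "Nr y > 0" using Nr_nonneg[OF nn] by simp
  define c where "c = root m (Nr y)"
  have cp: "c > 0" unfolding c_def using Np m2 by (simp add: real_root_gt_zero)
  have cm: "c ^ m = Nr y" unfolding c_def using Np m2 by simp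
  define y' where "y' = (\<lambda>i. inverse c * y i)"
  have y'nn: "\<forall>j. 0 \<le> y' j" unfolding y'_def using nn cp by simp
  have icm: "inverse c ^ m = inverse (Nr y)" using cm by (simp add: power_inverse)
  have Ny': "Nr y' = 1" unfolding y'_def Nr_scale icm using Np by simp
  have "y' \<in> Kset"
  proof -
    have "y' i \<le> 1" if "i < n" for i
    proof -
      have "y' i ^ m \<le> Nr y'" unfolding Nr_def
        by (rule member_le_sum) (use that y'nn in auto)
      hence "y' i ^ m \<le> 1" using Ny' by simp
      thus ?thesis using m2 y'nn power_le_one_iff[of "y' i" m] by auto
    qed
    moreover have "\<forall>i\<ge>n. y' i = 0" unfolding y'_def using sup by simp
    ultimately show ?thesis unfolding Kset_def using y'nn Ny' by auto
  qed
  hence "Fr y' \<le> Fr x" using mx by auto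
  moreover have "Fr y' = Fr y / Nr y" unfolding y'_def Fr_scale icm by (simp add: divide_inverse mult.commute)
  ultimately have "Fr y / Nr y \<le> Fr x" by simp
  thus ?thesis using Np by (simp add: pos_divide_le_eq)
qed

lemma Kset_nn: "x \<in> Kset \<Longrightarrow> 0 \<le> x i"
  unfolding Kset_def by (cases "i < n") auto

lemma pos_max:
  assumes xK: "x \<in> Kset" and mx: "\<forall>y\<in>Kset. Fr y \<le> Fr x" and i: "i < n"
  shows "x i > 0"
proof (rule ccontr)
  assume "\<not> x i > 0"
  hence xi0: "x i = 0" using Kset_nn[OF xK, of i] by simp
  have xnn: "\<forall>j. 0 \<le> x j" using Kset_nn[OF xK] by auto
  have xsup: "\<forall>j\<ge>n. x j = 0" and Nx: "Nr x = 1" using xK unfolding Kset_def by auto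
  define W where "W = {j. j < n \<and> x j > 0}"
  define Z where "Z = {j. j < n \<and> x j = 0}"
  have iZ: "i \<in> Z" using i xi0 unfolding Z_def by simp
  have WZ: "j \<in> W \<or> j \<in> Z" if "j < n" for j using that xnn[rule_format, of j] unfolding W_def Z_def by auto
  have Wne: "W \<noteq> {}"
  proof
    assume "W = {}"
    hence "\<forall>j<n. x j = 0" using WZ unfolding Z_def by auto
    hence "Nr x = 0" unfolding Nr_def using m2 by simp
    thus False using Nx by simp
  qed
  then obtain w where wW: "w \<in> W" by auto
  have "\<exists>e\<in>E. \<exists>j0\<in>e. \<exists>z0\<in>e. j0 \<in> W \<and> z0 \<in> Z"
  proof (rule ccontr)
    assume nex: "\<not> ?thesis"
    have "i \<in> W"
    proof (rule conn_closed[of W w i])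
      fix e a b assume e: "e \<in> E" and a: "a \<in> e" and b: "b \<in> e" and aW: "a \<in> W"
      have "b < n" using edge_sub[OF e] b by auto
      thus "b \<in> W" using WZ nex e a b aW by blast
    qed (use wW i in \<open>auto simp: W_def\<close>)
    thus False using iZ unfolding W_def Z_def by auto
  qed
  then obtain e j0 z0 where e: "e \<in> E" and j0: "j0 \<in> e" "j0 \<in> W" and z0: "z0 \<in> e" "z0 \<in> Z" by blast
  have finW: "finite W" unfolding W_def by auto
  have finZ: "finite Z" unfolding Z_def by auto
  define \<delta> where "\<delta> = Min (x ` W)"
  have \<delta>p: "\<delta> > 0" unfolding \<delta>_def using finW Wne by (subst Min_gr_iff) (auto simp: W_def)
  have \<delta>le: "\<delta> \<le> x j" if "j \<in> W" for j unfolding \<delta>_def using finW that by auto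
  define lam where "lam = Fr x"
  have lam0: "lam \<ge> 0" unfolding lam_def using Fr_nonneg xnn by auto
  define cZ where "cZ = real (card Z)"
  have cZ0: "cZ \<ge> 0" unfolding cZ_def by simp
  define \<epsilon> where "\<epsilon> = min (min 1 \<delta>) (real m * \<delta> / (2 * (lam * cZ + 1)))"
  have lc0: "lam * cZ \<ge> 0" "cZ * lam \<ge> 0" using lam0 cZ0 by simp_all
  hence "lam * cZ + 1 > 0" by (smt (verit))
  hence den: "2 * (lam * cZ + 1) > 0" by simp
  have \<epsilon>p: "\<epsilon> > 0" unfolding \<epsilon>_def using \<delta>p m2 den by simp
  have \<epsilon>1: "\<epsilon> \<le> 1" and \<epsilon>\<delta>: "\<epsilon> \<le> \<delta>" unfolding \<epsilon>_def by auto
  have \<epsilon>3: "\<epsilon> * (2 * (lam * cZ + 1)) \<le> real m * \<delta>"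
  proof -
    have "\<epsilon> \<le> real m * \<delta> / (2 * (lam * cZ + 1))" unfolding \<epsilon>_def by simp
    thus ?thesis using den by (simp add: pos_le_divide_eq)
  qed
  define y where "y = (\<lambda>j. if j \<in> Z then \<epsilon> else x j)"
  have ynn: "\<forall>j. 0 \<le> y j" unfolding y_def using xnn \<epsilon>p by (auto simp: less_imp_le)
  have ysup: "\<forall>j\<ge>n. y j = 0" unfolding y_def Z_def using xsup by auto
  have xy: "x j \<le> y j" for j unfolding y_def Z_def using \<epsilon>p by auto
  have yge: "\<epsilon> \<le> y j" if "j < n" for j
    using WZ[OF that] \<delta>le \<epsilon>\<delta> unfolding y_def by force
  
  have "Nr y = (\<Sum>j<n. x j ^ m + (if j \<in> Z then \<epsilon> ^ m else 0))"
    unfolding Nr_def y_def using m2 by (intro sum.cong) (auto simp: Z_def)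
  also have "\<dots> = Nr x + (\<Sum>j<n. if j \<in> Z then \<epsilon> ^ m else 0)" unfolding Nr_def by (simp add: sum.distrib)
  also have "(\<Sum>j<n. if j \<in> Z then \<epsilon> ^ m else 0) = (\<Sum>j\<in>{j\<in>{..<n}. j \<in> Z}. \<epsilon> ^ m)"
    by (rule sum.inter_filter[OF finite_lessThan, symmetric])
  also have "{j\<in>{..<n}. j \<in> Z} = Z" unfolding Z_def by auto
  finally have Ny: "Nr y = 1 + cZ * \<epsilon> ^ m" using Nx unfolding cZ_def by simp
  
  have s1: "(\<Sum>j<n. real (hg_degree E j) * x j ^ m) \<le> (\<Sum>j<n. real (hg_degree E j) * y j ^ m)"
    using xy xnn by (intro sum_mono mult_left_mono power_mono) auto
  have pe0: "(\<Prod>j\<in>e. x j) = 0" using z0 edge_fin[OF e] unfolding Z_def by (auto intro: prod_zero)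
  have pey: "\<delta> * \<epsilon> ^ (m - 1) \<le> (\<Prod>j\<in>e. y j)"
  proof -
    have "(\<Prod>j\<in>e. y j) = y j0 * (\<Prod>j\<in>e-{j0}. y j)" by (rule prod_split[OF e j0(1)])
    moreover have "\<delta> \<le> y j0" using \<delta>le[OF j0(2)] xy[of j0] by simp
    moreover have "\<epsilon> ^ (m-1) \<le> (\<Prod>j\<in>e-{j0}. y j)"
    proof -
      have "(\<Prod>j\<in>e-{j0}. \<epsilon>) \<le> (\<Prod>j\<in>e-{j0}. y j)"
        using yge edge_sub[OF e] \<epsilon>p by (intro prod_mono) auto
      thus ?thesis using card_minus[OF e j0(1)] by simp
    qed
    ultimately show ?thesis using \<delta>p \<epsilon>p ynn
      by (metis mult_mono less_imp_le zero_le_power)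
  qed
  have s2: "(\<Sum>f\<in>E. \<Prod>j\<in>f. x j) + \<delta> * \<epsilon> ^ (m - 1) \<le> (\<Sum>f\<in>E. \<Prod>j\<in>f. y j)"
  proof -
    have "(\<Sum>f\<in>E. \<Prod>j\<in>f. x j) = (\<Prod>j\<in>e. x j) + (\<Sum>f\<in>E-{e}. \<Prod>j\<in>f. x j)"
      using finE e by (simp add: sum.remove)
    moreover have "(\<Sum>f\<in>E. \<Prod>j\<in>f. y j) = (\<Prod>j\<in>e. y j) + (\<Sum>f\<in>E-{e}. \<Prod>j\<in>f. y j)"
      using finE e by (simp add: sum.remove)
    moreover have "(\<Sum>f\<in>E-{e}. \<Prod>j\<in>f. x j) \<le> (\<Sum>f\<in>E-{e}. \<Prod>j\<in>f. y j)"
      using xy xnn by (intro sum_mono prod_mono) auto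
    ultimately show ?thesis using pe0 pey by simp
  qed
  have Fy: "Fr x + real m * (\<delta> * \<epsilon> ^ (m - 1)) \<le> Fr y"
  proof -
    have "real m * ((\<Sum>f\<in>E. \<Prod>j\<in>f. x j) + \<delta> * \<epsilon> ^ (m - 1)) \<le> real m * (\<Sum>f\<in>E. \<Prod>j\<in>f. y j)"
      using s2 by (intro mult_left_mono) auto
    thus ?thesis using s1 unfolding Fr_def by (simp add: distrib_left)
  qed
  have "Fr y \<le> Fr x * Nr y" by (rule key_ineq[OF xK mx ynn ysup])
  hence "lam + real m * (\<delta> * \<epsilon> ^ (m - 1)) \<le> lam * (1 + cZ * \<epsilon> ^ m)"
    using Fy Ny unfolding lam_def by simp
  hence "real m * \<delta> * \<epsilon> ^ (m - 1) \<le> (lam * cZ * \<epsilon>) * \<epsilon> ^ (m - 1)"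
  proof -
    assume h: "lam + real m * (\<delta> * \<epsilon> ^ (m - 1)) \<le> lam * (1 + cZ * \<epsilon> ^ m)"
    have "\<epsilon> ^ m = \<epsilon> * \<epsilon> ^ (m - 1)" using m2 by (metis Suc_diff_1 less_le_trans pos2 power_Suc)
    thus ?thesis using h by (simp add: algebra_simps)
  qed
  hence A: "real m * \<delta> \<le> lam * cZ * \<epsilon>" using \<epsilon>p by (simp add: mult_le_cancel_right)
  have "lam * cZ * \<epsilon> * (2 * (lam * cZ + 1)) \<le> lam * cZ * (real m * \<delta>)"
    using \<epsilon>3 lam0 cZ0 by (simp add: mult.assoc mult_left_mono)
  moreover have "lam * cZ * (real m * \<delta>) < (2 * (lam * cZ + 1)) * (real m * \<delta>)"
  proof (rule mult_strict_right_mono)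
    show "lam * cZ < 2 * (lam * cZ + 1)" using lc0(1) by (smt (verit))
    show "0 < real m * \<delta>" using \<delta>p m2 by simp
  qed
  ultimately have "lam * cZ * \<epsilon> < real m * \<delta>" using den
    by (metis mult.commute mult_less_cancel_left_pos order_le_less_trans)
  thus False using A by simp
qed


lemma kkt:
  assumes xK: "x \<in> Kset" and mx: "\<forall>y\<in>Kset. Fr y \<le> Fr x" and i: "i < n"
  shows "real (hg_degree E i) * x i ^ (m-1) + (\<Sum>e\<in>Ei i. \<Prod>j\<in>e-{i}. x j) = Fr x * x i ^ (m-1)"
proof -
  have xnn: "\<forall>j. 0 \<le> x j" using Kset_nn[OF xK] by auto
  have xsup: "\<forall>j\<ge>n. x j = 0" and Nx: "Nr x = 1" using xK unfolding Kset_def by auto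
  have xp: "x i > 0" by (rule pos_max[OF xK mx i])
  define lam where "lam = Fr x"
  define dg where "dg = real (hg_degree E i)"
  define B where "B = (\<Sum>e\<in>Ei i. \<Prod>j\<in>e-{i}. x j)"
  define R1 where "R1 = (\<Sum>j\<in>{..<n}-{i}. x j ^ m)"
  define R2 where "R2 = (\<Sum>j\<in>{..<n}-{i}. real (hg_degree E j) * x j ^ m)"
  define R3 where "R3 = (\<Sum>e\<in>E - Ei i. \<Prod>j\<in>e. x j)"
  define P where "P = (\<lambda>s::real. lam * (s ^ m + R1) - (dg * s ^ m + R2 + real m * (s * B + R3)))"
  have PN: "P s = lam * Nr (x(i := s)) - Fr (x(i := s))" for s
  proof -
    have N: "Nr (x(i := s)) = s ^ m + R1"
      unfolding Nr_def R1_def using i by (subst sum.remove[of _ i]) auto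
    have F1: "(\<Sum>j<n. real (hg_degree E j) * (x(i := s)) j ^ m) = dg * s ^ m + R2"
      unfolding R2_def dg_def using i by (subst sum.remove[of _ i]) auto
    have EE: "E = Ei i \<union> (E - Ei i)" unfolding Ei_def by auto
    have "(\<Sum>e\<in>E. \<Prod>j\<in>e. (x(i := s)) j) = (\<Sum>e\<in>Ei i. \<Prod>j\<in>e. (x(i := s)) j) + (\<Sum>e\<in>E - Ei i. \<Prod>j\<in>e. (x(i := s)) j)"
      using finE finEi by (subst EE, subst sum.union_disjoint) auto
    also have "(\<Sum>e\<in>Ei i. \<Prod>j\<in>e. (x(i := s)) j) = s * B"
    proof -
      have "(\<Sum>e\<in>Ei i. \<Prod>j\<in>e. (x(i := s)) j) = (\<Sum>e\<in>Ei i. s * (\<Prod>j\<in>e-{i}. x j))"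
      proof (rule sum.cong[OF refl])
        fix e assume e: "e \<in> Ei i"
        hence eE: "e \<in> E" and ie: "i \<in> e" unfolding Ei_def by auto
        have "(\<Prod>j\<in>e. (x(i := s)) j) = (x(i := s)) i * (\<Prod>j\<in>e-{i}. (x(i := s)) j)"
          by (rule prod_split[OF eE ie])
        also have "(\<Prod>j\<in>e-{i}. (x(i := s)) j) = (\<Prod>j\<in>e-{i}. x j)" by (intro prod.cong) auto
        finally show "(\<Prod>j\<in>e. (x(i := s)) j) = s * (\<Prod>j\<in>e-{i}. x j)" by simp
      qed
      thus ?thesis unfolding B_def by (simp add: sum_distrib_left)
    qed
    also have "(\<Sum>e\<in>E - Ei i. \<Prod>j\<in>e. (x(i := s)) j) = R3"
      unfolding R3_def by (intro sum.cong refl prod.cong) (auto simp: Ei_def)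
    finally have F2: "(\<Sum>e\<in>E. \<Prod>j\<in>e. (x(i := s)) j) = s * B + R3" .
    show ?thesis unfolding P_def Fr_def N F1 F2 by simp
  qed
  have P0: "P (x i) = 0" using PN[of "x i"] Nx unfolding lam_def by simp
  have Pge: "P s \<ge> 0" if "s \<ge> 0" for s
  proof -
    have "\<forall>j. 0 \<le> (x(i := s)) j" using xnn that by auto
    moreover have "\<forall>j\<ge>n. (x(i := s)) j = 0" using xsup i by auto
    ultimately have "Fr (x(i := s)) \<le> Fr x * Nr (x(i := s))" by (rule key_ineq[OF xK mx])
    thus ?thesis unfolding PN lam_def by simp
  qed
  have D: "DERIV P (x i) :> lam * (real m * x i ^ (m - 1)) - (dg * (real m * x i ^ (m - 1)) + real m * B)"
    unfolding P_def by (auto intro!: derivative_eq_intros)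
  have "lam * (real m * x i ^ (m - 1)) - (dg * (real m * x i ^ (m - 1)) + real m * B) = 0"
  proof (rule DERIV_local_min[OF D xp])
    show "\<forall>y. \<bar>x i - y\<bar> < x i \<longrightarrow> P (x i) \<le> P y"
      using Pge P0 by auto
  qed
  hence "real m * (dg * x i ^ (m - 1) + B) = real m * (lam * x i ^ (m - 1))" by (simp add: algebra_simps)
  hence "dg * x i ^ (m - 1) + B = lam * x i ^ (m - 1)" using m2 by simp
  thus ?thesis unfolding dg_def B_def lam_def .
qed

lemma perron:
  "\<exists>u mu. (\<forall>i<n. u i > 0) \<and> (\<forall>i\<ge>n. u i = 0) \<and> u 0 = 1 \<and>
     (\<forall>i<n. real (hg_degree E i) * u i ^ (m-1) + (\<Sum>e\<in>Ei i. \<Prod>j\<in>e-{i}. u j) = mu * u i ^ (m-1))"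
proof -
  obtain x where xK: "x \<in> Kset" and mx: "\<forall>y\<in>Kset. Fr y \<le> Fr x" using max_exists by blast
  have xp: "\<forall>i<n. x i > 0" using pos_max[OF xK mx] by auto
  have xsup: "\<forall>j\<ge>n. x j = 0" using xK unfolding Kset_def by auto
  have x0: "x 0 > 0" using xp n1 by auto
  define c where "c = inverse (x 0)"
  define u where "u = (\<lambda>j. c * x j)"
  have cp: "c > 0" unfolding c_def using x0 by simp
  have eq: "real (hg_degree E i) * u i ^ (m-1) + (\<Sum>e\<in>Ei i. \<Prod>j\<in>e-{i}. u j) = Fr x * u i ^ (m-1)"
    if i: "i < n" for i
  proof -
    have pc: "(\<Prod>j\<in>e-{i}. u j) = c ^ (m-1) * (\<Prod>j\<in>e-{i}. x j)" if e: "e \<in> Ei i" for e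
    proof -
      have "e \<in> E" "i \<in> e" using e unfolding Ei_def by auto
      thus ?thesis unfolding u_def using card_minus by (simp add: prod.distrib)
    qed
    have "real (hg_degree E i) * u i ^ (m-1) + (\<Sum>e\<in>Ei i. \<Prod>j\<in>e-{i}. u j)
        = c ^ (m-1) * (real (hg_degree E i) * x i ^ (m-1) + (\<Sum>e\<in>Ei i. \<Prod>j\<in>e-{i}. x j))"
      using pc unfolding u_def by (simp add: power_mult_distrib sum_distrib_left algebra_simps)
    also have "\<dots> = c ^ (m-1) * (Fr x * x i ^ (m-1))" using kkt[OF xK mx i] by simp
    also have "\<dots> = Fr x * u i ^ (m-1)" unfolding u_def by (simp add: power_mult_distrib)
    finally show ?thesis .
  qed
  show ?thesis
    by (rule exI[of _ u], rule exI[of _ "Fr x"])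
       (use xp xsup cp x0 eq in \<open>auto simp: u_def c_def\<close>)
qed

end


lemma re_eq_cmod: assumes "Re v = cmod v" shows "v = of_real (cmod v)"
proof -
  have "(cmod v)\<^sup>2 = (Re v)\<^sup>2 + (Im v)\<^sup>2" by (rule cmod_power2)
  hence "Im v = 0" using assms by simp
  thus ?thesis using assms by (simp add: complex_eq_iff)
qed

lemma TE:
  fixes z :: "'a \<Rightarrow> complex"
  assumes fin: "finite A" and s: "sum z A = w" and n: "(\<Sum>a\<in>A. cmod (z a)) = cmod w"
    and w: "w \<noteq> 0" and a: "a \<in> A"
  shows "z a = of_real (cmod (z a)) * (w / of_real (cmod w))"
proof -
  define u where "u = w / of_real (cmod w)"
  have cu: "cmod u = 1" unfolding u_def using w by (simp add: norm_divide)
  have uu: "cnj u * u = 1"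
  proof -
    have "u * cnj u = of_real ((cmod u)\<^sup>2)" by (rule complex_norm_square[symmetric])
    thus ?thesis using cu by (simp add: mult.commute)
  qed
  define v where "v = (\<lambda>b. z b * cnj u)"
  have cv: "cmod (v b) = cmod (z b)" for b unfolding v_def using cu by (simp add: norm_mult)
  have "(\<Sum>b\<in>A. Re (v b)) = Re (\<Sum>b\<in>A. v b)" by (simp only: Re_sum)
  also have "(\<Sum>b\<in>A. v b) = w * cnj u" unfolding v_def using s sum_distrib_right[of z A "cnj u"] by simp
  also have "w * cnj u = of_real (cmod w)"
  proof -
    have "w * cnj u = (w * cnj w) / of_real (cmod w)" unfolding u_def by simp
    also have "w * cnj w = of_real ((cmod w)\<^sup>2)" by (rule complex_norm_square[symmetric])
    finally show ?thesis using w by (simp add: power2_eq_square)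
  qed
  finally have "(\<Sum>b\<in>A. Re (v b)) = cmod w" by simp
  hence "(\<Sum>b\<in>A. cmod (v b) - Re (v b)) = 0" using n cv by (simp add: sum_subtractf)
  hence "\<forall>b\<in>A. cmod (v b) - Re (v b) = 0"
    using fin by (subst sum_nonneg_eq_0_iff[symmetric]) (auto simp: complex_Re_le_cmod)
  hence "Re (v a) = cmod (v a)" using a by simp
  hence "v a = of_real (cmod (z a))" using re_eq_cmod cv by metis
  hence "z a * cnj u * u = of_real (cmod (z a)) * u" unfolding v_def by simp
  thus ?thesis using uu unfolding u_def by (simp add: mult.assoc)
qed

lemma prod_eq_le:
  fixes a b :: "'a \<Rightarrow> real"
  assumes fin: "finite A" and le: "\<forall>j\<in>A. 0 \<le> a j \<and> a j \<le> b j" and bp: "\<forall>j\<in>A. b j > 0"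
    and eq: "(\<Prod>j\<in>A. a j) = (\<Prod>j\<in>A. b j)" and j: "j \<in> A"
  shows "a j = b j"
proof (rule ccontr)
  assume "a j \<noteq> b j"
  hence lt: "a j < b j" using le j by auto
  have "(\<Prod>j\<in>A. a j) = a j * (\<Prod>j\<in>A-{j}. a j)" using fin j by (simp add: prod.remove)
  also have "\<dots> \<le> a j * (\<Prod>j\<in>A-{j}. b j)"
    using le j by (intro mult_left_mono prod_mono) auto
  also have "\<dots> < b j * (\<Prod>j\<in>A-{j}. b j)"
  proof (rule mult_strict_right_mono[OF lt])
    show "0 < (\<Prod>j\<in>A-{j}. b j)" using bp by (intro prod_pos) auto
  qed
  also have "\<dots> = (\<Prod>j\<in>A. b j)" using fin j by (simp add: prod.remove)
  finally show False using eq by simp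
qed

context hgc begin

lemma GEN:
  fixes u c :: "nat \<Rightarrow> real" and \<kappa> :: complex and x :: "nat \<Rightarrow> complex"
  assumes upos: "\<forall>i<n. u i > 0"
    and ueq: "\<forall>i<n. (\<Sum>e\<in>Ei i. \<Prod>j\<in>e-{i}. u j) = c i * u i ^ (m-1)"
    and \<kappa>: "cmod \<kappa> = 1"
    and nz: "\<exists>i<n. x i \<noteq> 0"
    and xeq: "\<forall>i<n. (\<Sum>e\<in>Ei i. \<Prod>j\<in>e-{i}. x j) = \<kappa> * of_real (c i) * x i ^ (m-1)"
  shows "\<exists>t>0. (\<forall>i<n. cmod (x i) = t * u i) \<and>
     (\<forall>e\<in>E. \<forall>i\<in>e. (\<Prod>j\<in>e-{i}. x j) = \<kappa> * of_real ((\<Prod>j\<in>e-{i}. u j) / u i ^ (m-1)) * x i ^ (m-1))"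
proof -
  define R where "R = (\<lambda>i. cmod (x i) / u i)"
  define t where "t = Max (R ` {..<n})"
  have "0 \<in> {..<n}" using n1 by simp
  hence n0: "{..<n} \<noteq> {}" by blast
  have Rle: "R i \<le> t" if "i < n" for i unfolding t_def using that by auto
  obtain i1 where i1: "i1 < n" "x i1 \<noteq> 0" using nz by auto
  have tp: "t > 0"
  proof -
    have "R i1 > 0" unfolding R_def using i1 upos by auto
    thus ?thesis using Rle[OF i1(1)] by simp
  qed
  obtain i0 where i0: "i0 < n" "R i0 = t"
  proof -
    have "t \<in> R ` {..<n}" unfolding t_def using n0 by (intro Max_in) auto
    thus ?thesis using that by auto
  qed
  have xle: "cmod (x j) \<le> t * u j" if "j < n" for j
    using Rle[OF that] upos that unfolding R_def by (simp add: divide_le_eq mult.commute)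
  define W where "W = {i. i < n \<and> cmod (x i) = t * u i}"
  have ceq: "\<forall>e\<in>Ei i. \<forall>j\<in>e-{i}. cmod (x j) = t * u j" if iW: "i \<in> W" for i
  proof -
    have i: "i < n" and xi: "cmod (x i) = t * u i" using iW unfolding W_def by auto
    have "(\<Sum>e\<in>Ei i. \<Prod>j\<in>e-{i}. u j) \<ge> 0"
    proof (intro sum_nonneg prod_nonneg)
      fix e j assume a: "e \<in> Ei i" "j \<in> e - {i}"
      hence eE: "e \<in> E" and je: "j \<in> e" unfolding Ei_def by auto
      have "j < n" using edge_sub[OF eE] je by auto
      thus "0 \<le> u j" using upos by (simp add: less_imp_le)
    qed
    hence ci: "c i * u i ^ (m-1) \<ge> 0" using ueq i by simp
    have "(\<Sum>e\<in>Ei i. \<Prod>j\<in>e-{i}. t * u j) = (\<Sum>e\<in>Ei i. t ^ (m-1) * (\<Prod>j\<in>e-{i}. u j))"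
      using card_minus by (intro sum.cong) (auto simp: prod.distrib Ei_def)
    also have "\<dots> = t ^ (m-1) * (c i * u i ^ (m-1))" using ueq i by (simp add: sum_distrib_left[symmetric])
    also have "\<dots> = cmod (x i ^ (m-1)) * c i" using xi by (simp add: norm_power power_mult_distrib)
    also have "\<dots> = cmod (\<Sum>e\<in>Ei i. \<Prod>j\<in>e-{i}. x j)"
    proof -
      have up: "u i ^ (m-1) > 0" using upos i by simp
      have c0: "c i \<ge> 0" using ci up by (simp add: zero_le_mult_iff)
      have "cmod (\<Sum>e\<in>Ei i. \<Prod>j\<in>e-{i}. x j) = cmod (x i ^ (m-1)) * \<bar>c i\<bar>"
        using xeq i \<kappa> by (simp add: norm_mult)
      thus ?thesis using c0 by simp
    qed
    also have "\<dots> \<le> (\<Sum>e\<in>Ei i. \<Prod>j\<in>e-{i}. cmod (x j))" by (rule order_trans[OF norm_sum]) (simp add: prod_norm)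
    finally have le1: "(\<Sum>e\<in>Ei i. \<Prod>j\<in>e-{i}. t * u j) \<le> (\<Sum>e\<in>Ei i. \<Prod>j\<in>e-{i}. cmod (x j))" .
    have le2: "(\<Prod>j\<in>e-{i}. cmod (x j)) \<le> (\<Prod>j\<in>e-{i}. t * u j)" if e: "e \<in> Ei i" for e
    proof -
      have eE: "e \<in> E" using e unfolding Ei_def by auto
      show ?thesis using xle edge_sub[OF eE] by (intro prod_mono) auto
    qed
    have "(\<Sum>e\<in>Ei i. (\<Prod>j\<in>e-{i}. t * u j) - (\<Prod>j\<in>e-{i}. cmod (x j))) = 0"
    proof -
      have "(\<Sum>e\<in>Ei i. \<Prod>j\<in>e-{i}. cmod (x j)) \<le> (\<Sum>e\<in>Ei i. \<Prod>j\<in>e-{i}. t * u j)"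
        using le2 by (rule sum_mono)
      thus ?thesis using le1 by (simp add: sum_subtractf)
    qed
    hence "\<forall>e\<in>Ei i. (\<Prod>j\<in>e-{i}. t * u j) - (\<Prod>j\<in>e-{i}. cmod (x j)) = 0"
      using finEi le2 by (subst sum_nonneg_eq_0_iff[symmetric]) auto
    show ?thesis
    proof (intro ballI)
      fix e j assume e: "e \<in> Ei i" and j: "j \<in> e - {i}"
      have eE: "e \<in> E" using e unfolding Ei_def by auto
      show "cmod (x j) = t * u j"
      proof (rule prod_eq_le[where A = "e - {i}"])
        show "finite (e - {i})" using edge_fin[OF eE] by simp
        show "\<forall>j\<in>e - {i}. 0 \<le> cmod (x j) \<and> cmod (x j) \<le> t * u j" using xle edge_sub[OF eE] by auto
        show "\<forall>j\<in>e - {i}. 0 < t * u j" using tp upos edge_sub[OF eE] by auto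
        show "(\<Prod>j\<in>e - {i}. cmod (x j)) = (\<Prod>j\<in>e - {i}. t * u j)"
          using \<open>\<forall>e\<in>Ei i. _\<close> e by auto
      qed (rule j)
    qed
  qed
  have allW: "v \<in> W" if v: "v < n" for v
  proof (rule conn_closed[of W i0 v])
    fix e a b assume e: "e \<in> E" and a: "a \<in> e" and b: "b \<in> e" and aW: "a \<in> W"
    show "b \<in> W"
    proof (cases "b = a")
      case False
      hence "cmod (x b) = t * u b" using ceq[OF aW] e a b unfolding Ei_def by auto
      thus ?thesis using edge_sub[OF e] b unfolding W_def by auto
    qed (use aW in simp)
  next
    have "cmod (x i0) = t * u i0" using i0 upos[rule_format, OF i0(1)] unfolding R_def by (auto simp: field_simps)
    thus "i0 \<in> W" using i0 unfolding W_def by auto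
  qed (use i0 v in auto)
  hence xabs: "\<forall>i<n. cmod (x i) = t * u i" unfolding W_def by auto
  have phase: "(\<Prod>j\<in>e-{i}. x j) = \<kappa> * of_real ((\<Prod>j\<in>e-{i}. u j) / u i ^ (m-1)) * x i ^ (m-1)"
    if e: "e \<in> E" and ie: "i \<in> e" for e i
  proof -
    have i: "i < n" using edge_sub[OF e] ie by auto
    have eEi: "e \<in> Ei i" using e ie unfolding Ei_def by auto
    have zabs: "cmod (\<Prod>j\<in>f-{i}. x j) = t ^ (m-1) * (\<Prod>j\<in>f-{i}. u j)" if f: "f \<in> Ei i" for f
    proof -
      have fE: "f \<in> E" and if': "i \<in> f" using f unfolding Ei_def by auto
      have "cmod (\<Prod>j\<in>f-{i}. x j) = (\<Prod>j\<in>f-{i}. t * u j)"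
        unfolding prod_norm[symmetric] using xabs edge_sub[OF fE] by (intro prod.cong) auto
      thus ?thesis using card_minus[OF fE if'] by (simp add: prod.distrib)
    qed
    have upe: "(\<Prod>j\<in>f-{i}. u j) > 0" if f: "f \<in> Ei i" for f
    proof -
      have fE: "f \<in> E" using f unfolding Ei_def by auto
      show ?thesis using upos edge_sub[OF fE] by (intro prod_pos) auto
    qed
    have Sp: "(\<Sum>f\<in>Ei i. \<Prod>j\<in>f-{i}. u j) > 0"
      using eEi finEi upe by (intro sum_pos) auto
    hence cip: "c i > 0" using ueq i upos[rule_format, OF i]
      by (metis zero_less_mult_pos2 zero_less_power)
    define w where "w = \<kappa> * of_real (c i) * x i ^ (m-1)"
    have xi0: "x i \<noteq> 0" using xabs i tp upos by fastforce
    have wn: "w \<noteq> 0" unfolding w_def using \<kappa> cip xi0 by auto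
    have cw: "cmod w = c i * (t * u i) ^ (m-1)" unfolding w_def using \<kappa> cip xabs i
      by (simp add: norm_mult norm_power)
    have "(\<Sum>f\<in>Ei i. cmod (\<Prod>j\<in>f-{i}. x j)) = (\<Sum>f\<in>Ei i. t ^ (m-1) * (\<Prod>j\<in>f-{i}. u j))"
      using zabs by (intro sum.cong) auto
    also have "\<dots> = t ^ (m-1) * (\<Sum>f\<in>Ei i. \<Prod>j\<in>f-{i}. u j)" by (simp add: sum_distrib_left)
    also have "\<dots> = cmod w" using ueq i cw by (simp add: power_mult_distrib mult_ac)
    finally have sn: "(\<Sum>f\<in>Ei i. cmod (\<Prod>j\<in>f-{i}. x j)) = cmod w" .
    have "(\<Prod>j\<in>e-{i}. x j) = of_real (cmod (\<Prod>j\<in>e-{i}. x j)) * (w / of_real (cmod w))"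
      by (rule TE[OF finEi _ sn wn eEi]) (use xeq i in \<open>simp add: w_def\<close>)
    also have "\<dots> = of_real (t ^ (m-1) * (\<Prod>j\<in>e-{i}. u j)) * (\<kappa> * of_real (c i) * x i ^ (m-1)) / of_real (c i * (t * u i) ^ (m-1))"
      using zabs[OF eEi] cw unfolding w_def by simp
    also have "\<dots> = \<kappa> * of_real ((\<Prod>j\<in>e-{i}. u j) / u i ^ (m-1)) * x i ^ (m-1)"
      using cip tp upos i by (simp add: field_simps power_mult_distrib)
    finally show ?thesis .
  qed
  show ?thesis using tp xabs phase by blast
qed

end


context hgc begin

definition cls :: "(nat \<Rightarrow> complex) \<Rightarrow> (nat \<Rightarrow> complex) set" where
  "cls x = {(\<lambda>i. c * x i) | c. c \<noteq> 0}"

lemma eigen_scale: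
  assumes "eigenpair m n T lam x" "c \<noteq> 0"
  shows "eigenpair m n T lam (\<lambda>i. c * x i)"
proof -
  have x: "\<forall>i\<ge>n. x i = 0" "\<exists>i<n. x i \<noteq> 0" "\<forall>i<n. tensor_apply m n T x i = lam * x i ^ (m - 1)"
    using assms(1) unfolding eigenpair_def by auto
  have "\<forall>i<n. tensor_apply m n T (\<lambda>i. c * x i) i = lam * (c * x i) ^ (m - 1)"
    using x(3) by (simp add: apply_scale power_mult_distrib)
  moreover have "\<exists>i<n. c * x i \<noteq> 0" using x(2) assms(2) by auto
  ultimately show ?thesis using x(1) unfolding eigenpair_def by auto
qed

lemma pv_card:
  assumes nz: "\<And>x. eigenpair m n T lam x \<Longrightarrow> x 0 \<noteq> 0"
  shows "card (proj_eigvariety m n T lam) = card {x. eigenpair m n T lam x \<and> x 0 = 1}"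
proof -
  define X0 where "X0 = {x. eigenpair m n T lam x \<and> x 0 = 1}"
  have PV: "proj_eigvariety m n T lam = cls ` X0"
  proof
    show "proj_eigvariety m n T lam \<subseteq> cls ` X0"
    proof
      fix p assume "p \<in> proj_eigvariety m n T lam"
      then obtain x where x: "eigenpair m n T lam x" and p: "p = cls x"
        unfolding proj_eigvariety_def cls_def by auto
      have x0: "x 0 \<noteq> 0" using nz[OF x] .
      define x' where "x' = (\<lambda>i. inverse (x 0) * x i)"
      have x'X: "x' \<in> X0" unfolding X0_def x'_def using eigen_scale[OF x] x0 by simp
      have "cls x = cls x'"
      proof
        show "cls x \<subseteq> cls x'"
        proof
          fix q assume "q \<in> cls x"
          then obtain c where c: "c \<noteq> 0" "q = (\<lambda>i. c * x i)" unfolding cls_def by auto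
          have "q = (\<lambda>i. (c * x 0) * x' i)" unfolding c x'_def using x0 by (auto simp: field_simps)
          thus "q \<in> cls x'" unfolding cls_def using c x0 by auto
        qed
        show "cls x' \<subseteq> cls x"
        proof
          fix q assume "q \<in> cls x'"
          then obtain c where c: "c \<noteq> 0" "q = (\<lambda>i. c * x' i)" unfolding cls_def by auto
          have "q = (\<lambda>i. (c * inverse (x 0)) * x i)" unfolding c x'_def by (auto simp: field_simps)
          thus "q \<in> cls x" unfolding cls_def using c x0 by auto
        qed
      qed
      thus "p \<in> cls ` X0" using p x'X by auto
    qed
    show "cls ` X0 \<subseteq> proj_eigvariety m n T lam"
      unfolding proj_eigvariety_def cls_def X0_def by auto
  qed
  have inj: "inj_on cls X0"
  proof (rule inj_onI)
    fix x y assume x: "x \<in> X0" and y: "y \<in> X0" and eq: "cls x = cls y"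
    have "x \<in> cls x" unfolding cls_def by (rule CollectI, rule exI[of _ 1]) auto
    hence "x \<in> cls y" using eq by simp
    then obtain c where c: "x = (\<lambda>i. c * y i)" unfolding cls_def by auto
    have "x 0 = c * y 0" using c by simp
    hence "c = 1" using x y unfolding X0_def by simp
    thus "x = y" using c by simp
  qed
  show ?thesis unfolding PV X0_def[symmetric] using inj by (simp add: card_image)
qed

lemma deg_real: "real (hg_degree E i) = real (card (Ei i))" by (simp add: deg_Ei)

lemma ueq_one: "\<forall>i<n. (\<Sum>e\<in>Ei i. \<Prod>j\<in>e-{i}. (1::real)) = real (hg_degree E i) * 1 ^ (m-1)"
  by (simp add: deg_Ei)

lemma zero_gen:
  assumes \<kappa>: "cmod \<kappa> = 1" and nz: "\<exists>i<n. x i \<noteq> 0"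
    and xeq: "\<forall>i<n. (\<Sum>e\<in>Ei i. \<Prod>j\<in>e-{i}. x j) = \<kappa> * of_nat (hg_degree E i) * x i ^ (m-1)"
  shows "(\<forall>i<n. x i \<noteq> 0) \<and> (\<forall>e\<in>E. \<forall>i\<in>e. (\<Prod>j\<in>e-{i}. x j) = \<kappa> * x i ^ (m-1))"
proof -
  have xeq': "\<forall>i<n. (\<Sum>e\<in>Ei i. \<Prod>j\<in>e-{i}. x j) = \<kappa> * of_real (real (hg_degree E i)) * x i ^ (m-1)"
    using xeq by simp
  obtain t where t: "t > 0" "\<forall>i<n. cmod (x i) = t * 1"
    "\<forall>e\<in>E. \<forall>i\<in>e. (\<Prod>j\<in>e-{i}. x j) = \<kappa> * of_real ((\<Prod>j\<in>e-{i}. (1::real)) / 1 ^ (m-1)) * x i ^ (m-1)"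
    using GEN[of "\<lambda>_. 1" "\<lambda>i. real (hg_degree E i)" \<kappa> x, OF _ ueq_one \<kappa> nz xeq'] by auto
  have "\<forall>i<n. x i \<noteq> 0" using t by fastforce
  moreover have "\<forall>e\<in>E. \<forall>i\<in>e. (\<Prod>j\<in>e-{i}. x j) = \<kappa> * x i ^ (m-1)" using t(3) by simp
  ultimately show ?thesis by blast
qed

lemma eig_nz: "eigenpair m n T lam x \<Longrightarrow> \<exists>i<n. x i \<noteq> 0" unfolding eigenpair_def by auto

lemma sum_const_Ei: "(\<Sum>e\<in>Ei i. (a::complex)) = of_nat (hg_degree E i) * a"
  by (simp add: deg_Ei)

lemma PV0_L: "card (proj_eigvariety m n (lap_tensor m n E) 0) = card Sset"
proof -
  have char: "eigenpair m n (lap_tensor m n E) 0 x \<longleftrightarrow>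
     (\<forall>i\<ge>n. x i = 0) \<and> (\<exists>i<n. x i \<noteq> 0) \<and> (\<forall>i<n. (\<Sum>e\<in>Ei i. \<Prod>j\<in>e-{i}. x j) = 1 * of_nat (hg_degree E i) * x i ^ (m-1))" for x
  proof -
    have "\<forall>i<n. tensor_apply m n (lap_tensor m n E) x i = 0 * x i ^ (m-1) \<longleftrightarrow>
       (\<Sum>e\<in>Ei i. \<Prod>j\<in>e-{i}. x j) = 1 * of_nat (hg_degree E i) * x i ^ (m-1)"
      using L_apply by auto
    thus ?thesis unfolding eigenpair_def by auto
  qed
  have nz: "x 0 \<noteq> 0" if "eigenpair m n (lap_tensor m n E) 0 x" for x
    using zero_gen[of 1 x] that n1 unfolding char by auto
  have "{x. eigenpair m n (lap_tensor m n E) 0 x \<and> x 0 = 1} = Sset"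
  proof
    show "{x. eigenpair m n (lap_tensor m n E) 0 x \<and> x 0 = 1} \<subseteq> Sset"
    proof
      fix x assume "x \<in> {x. eigenpair m n (lap_tensor m n E) 0 x \<and> x 0 = 1}"
      hence x: "eigenpair m n (lap_tensor m n E) 0 x" "x 0 = 1" by auto
      have "(\<forall>i<n. x i \<noteq> 0) \<and> (\<forall>e\<in>E. \<forall>i\<in>e. (\<Prod>j\<in>e-{i}. x j) = 1 * x i ^ (m-1))"
        using x(1) unfolding char by (intro zero_gen) auto
      thus "x \<in> Sset" using x unfolding Sset_def stabC_def eigenpair_def by auto
    qed
    show "Sset \<subseteq> {x. eigenpair m n (lap_tensor m n E) 0 x \<and> x 0 = 1}"
    proof
      fix d assume d: "d \<in> Sset"
      have "(\<Sum>e\<in>Ei i. \<Prod>j\<in>e-{i}. d j) = 1 * of_nat (hg_degree E i) * d i ^ (m-1)" for i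
      proof -
        have "(\<Sum>e\<in>Ei i. \<Prod>j\<in>e-{i}. d j) = (\<Sum>e\<in>Ei i. d i ^ (m-1))"
          using d unfolding Sset_def stabC_def Ei_def by (intro sum.cong) auto
        thus ?thesis by (simp add: deg_Ei)
      qed
      moreover have "\<exists>i<n. d i \<noteq> 0" using d n1 unfolding Sset_def by (intro exI[of _ 0]) auto
      ultimately show "d \<in> {x. eigenpair m n (lap_tensor m n E) 0 x \<and> x 0 = 1}"
        unfolding char using d n1 unfolding Sset_def by auto
    qed
  qed
  moreover have "card (proj_eigvariety m n (lap_tensor m n E) 0) = card {x. eigenpair m n (lap_tensor m n E) 0 x \<and> x 0 = 1}"
    by (rule pv_card) (erule nz)
  ultimately show ?thesis by simp
qed


lemma PV0_Q:
  assumes oc: "odd_colorable m E"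
  shows "card (proj_eigvariety m n (slap_tensor m n E) 0) = card Sset"
proof -
  obtain fc where ev: "even m" and fc: "\<forall>e\<in>E. (\<Sum>v\<in>e. fc v) mod m = m div 2"
    using oc unfolding odd_colorable_def by auto
  define gc where "gc = (\<lambda>i. om m ^ fc i * inverse (om m ^ fc 0))"
  have gnz: "gc i \<noteq> 0" for i unfolding gc_def using om_nz by simp
  have g0: "gc 0 = 1" unfolding gc_def using om_nz by simp
  have gprop: "(\<Prod>j\<in>e-{i}. gc j) = - (gc i ^ (m-1))" if e: "e \<in> E" and ie: "i \<in> e" for e i
  proof -
    define a where "a = fc i"
    define s where "s = (\<Sum>j\<in>e-{i}. fc j)"
    have "(\<Sum>v\<in>e. fc v) = a + s" unfolding a_def s_def using edge_fin[OF e] ie by (simp add: sum.remove)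
    hence "(a + s) mod m = m div 2" using fc e by metis
    hence h1: "om m ^ a * om m ^ s = -1" using om_mod[OF m1, of "a + s"] om_half[OF ev m1] by (simp add: power_add)
    have "a + a * (m-1) = m * a" using m2 by (cases m) auto
    hence h2: "om m ^ a * om m ^ (a * (m-1)) = 1" using om_m[OF m1]
      by (metis power_add power_mult power_one)
    have "om m ^ a * om m ^ s = om m ^ a * (- (om m ^ (a * (m-1))))" using h1 h2 by simp
    hence hh: "om m ^ a * om m ^ s = om m ^ a * (- (om m ^ (a * (m-1))))" by simp
    have os: "om m ^ s = - (om m ^ (a * (m-1)))" using hh by (rule mult_left_cancel[OF om_nz[of m a], THEN iffD1])
    have "(\<Prod>j\<in>e-{i}. gc j) = (\<Prod>j\<in>e-{i}. om m ^ fc j) * (\<Prod>j\<in>e-{i}. inverse (om m ^ fc 0))"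
      unfolding gc_def by (rule prod.distrib)
    also have "(\<Prod>j\<in>e-{i}. om m ^ fc j) = om m ^ s" unfolding s_def by (rule power_sum[symmetric])
    also have "(\<Prod>j\<in>e-{i}. inverse (om m ^ fc 0)) = inverse (om m ^ fc 0) ^ (m-1)"
      using card_minus[OF e ie] by simp
    also have "gc i ^ (m-1) = om m ^ (a * (m-1)) * inverse (om m ^ fc 0) ^ (m-1)"
      unfolding gc_def a_def by (simp add: power_mult_distrib power_mult)
    ultimately show ?thesis using os by simp
  qed
  have char: "eigenpair m n (slap_tensor m n E) 0 x \<longleftrightarrow>
     (\<forall>i\<ge>n. x i = 0) \<and> (\<exists>i<n. x i \<noteq> 0) \<and> (\<forall>i<n. (\<Sum>e\<in>Ei i. \<Prod>j\<in>e-{i}. x j) = (-1) * of_nat (hg_degree E i) * x i ^ (m-1))" for x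
  proof -
    have "\<forall>i<n. tensor_apply m n (slap_tensor m n E) x i = 0 * x i ^ (m-1) \<longleftrightarrow>
       (\<Sum>e\<in>Ei i. \<Prod>j\<in>e-{i}. x j) = (-1) * of_nat (hg_degree E i) * x i ^ (m-1)"
    proof (intro allI impI)
      fix i assume i: "i < n"
      have "tensor_apply m n (slap_tensor m n E) x i = 0 * x i ^ (m-1) \<longleftrightarrow>
         of_nat (hg_degree E i) * x i ^ (m-1) + (\<Sum>e\<in>Ei i. \<Prod>j\<in>e-{i}. x j) = 0"
        using Q_apply[OF i] by simp
      also have "\<dots> \<longleftrightarrow> (\<Sum>e\<in>Ei i. \<Prod>j\<in>e-{i}. x j) = - (of_nat (hg_degree E i) * x i ^ (m-1))"
        by (rule add_eq_0_iff)
      also have "\<dots> \<longleftrightarrow> (\<Sum>e\<in>Ei i. \<Prod>j\<in>e-{i}. x j) = (-1) * of_nat (hg_degree E i) * x i ^ (m-1)"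
        by simp
      finally show "tensor_apply m n (slap_tensor m n E) x i = 0 * x i ^ (m-1) \<longleftrightarrow>
       (\<Sum>e\<in>Ei i. \<Prod>j\<in>e-{i}. x j) = (-1) * of_nat (hg_degree E i) * x i ^ (m-1)" .
    qed
    thus ?thesis unfolding eigenpair_def by auto
  qed
  have nz: "x 0 \<noteq> 0" if "eigenpair m n (slap_tensor m n E) 0 x" for x
    using zero_gen[of "-1" x] that n1 unfolding char by auto
  define X0 where "X0 = {x. eigenpair m n (slap_tensor m n E) 0 x \<and> x 0 = 1}"
  have X0c: "x \<in> X0 \<longleftrightarrow> (\<forall>i\<ge>n. x i = 0) \<and> x 0 = 1 \<and> (\<forall>i<n. x i \<noteq> 0) \<and>
      (\<forall>e\<in>E. \<forall>i\<in>e. (\<Prod>j\<in>e-{i}. x j) = - (x i ^ (m-1)))" for x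
  proof
    assume "x \<in> X0"
    hence x: "eigenpair m n (slap_tensor m n E) 0 x" "x 0 = 1" unfolding X0_def by auto
    have "(\<forall>i<n. x i \<noteq> 0) \<and> (\<forall>e\<in>E. \<forall>i\<in>e. (\<Prod>j\<in>e-{i}. x j) = (-1) * x i ^ (m-1))"
      using x(1) unfolding char by (intro zero_gen) auto
    thus "(\<forall>i\<ge>n. x i = 0) \<and> x 0 = 1 \<and> (\<forall>i<n. x i \<noteq> 0) \<and>
      (\<forall>e\<in>E. \<forall>i\<in>e. (\<Prod>j\<in>e-{i}. x j) = - (x i ^ (m-1)))" using x unfolding eigenpair_def by auto
  next
    assume h: "(\<forall>i\<ge>n. x i = 0) \<and> x 0 = 1 \<and> (\<forall>i<n. x i \<noteq> 0) \<and>
      (\<forall>e\<in>E. \<forall>i\<in>e. (\<Prod>j\<in>e-{i}. x j) = - (x i ^ (m-1)))"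
    have "(\<Sum>e\<in>Ei i. \<Prod>j\<in>e-{i}. x j) = (-1) * of_nat (hg_degree E i) * x i ^ (m-1)" for i
    proof -
      have "(\<Sum>e\<in>Ei i. \<Prod>j\<in>e-{i}. x j) = (\<Sum>e\<in>Ei i. - (x i ^ (m-1)))"
        using h unfolding Ei_def by (intro sum.cong) auto
      thus ?thesis by (simp add: deg_Ei)
    qed
    moreover have "\<exists>i<n. x i \<noteq> 0" using h n1 by (intro exI[of _ 0]) auto
    ultimately show "x \<in> X0" unfolding X0_def char using h by auto
  qed
  have "bij_betw (\<lambda>d i. d i * gc i) Sset X0"
  proof (rule bij_betw_byWitness[where f' = "\<lambda>x i. x i / gc i"])
    show "\<forall>a\<in>Sset. (\<lambda>i. a i * gc i / gc i) = a" using gnz by simp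
    show "\<forall>a'\<in>X0. (\<lambda>i. a' i / gc i * gc i) = a'" using gnz by simp
    show "(\<lambda>d i. d i * gc i) ` Sset \<subseteq> X0"
    proof (rule image_subsetI)
      fix d assume d: "d \<in> Sset"
      have st: "\<forall>e\<in>E. \<forall>i\<in>e. (\<Prod>j\<in>e-{i}. d j) = d i ^ (m-1)" using d unfolding Sset_def stabC_def by auto
      have "(\<Prod>j\<in>e-{i}. d j * gc j) = - ((d i * gc i) ^ (m-1))" if "e \<in> E" "i \<in> e" for e i
        using st gprop[OF that] that by (simp add: prod.distrib power_mult_distrib)
      thus "(\<lambda>i. d i * gc i) \<in> X0" unfolding X0c using d gnz g0 unfolding Sset_def by auto
    qed
    show "(\<lambda>x i. x i / gc i) ` X0 \<subseteq> Sset"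
    proof (rule image_subsetI)
      fix x assume x: "x \<in> X0"
      have st: "\<forall>e\<in>E. \<forall>i\<in>e. (\<Prod>j\<in>e-{i}. x j) = - (x i ^ (m-1))" using x unfolding X0c by auto
      have "(\<Prod>j\<in>e-{i}. x j / gc j) = (x i / gc i) ^ (m-1)" if "e \<in> E" "i \<in> e" for e i
        using st gprop[OF that] that by (simp add: prod_dividef power_divide)
      thus "(\<lambda>i. x i / gc i) \<in> Sset" unfolding Sset_def stabC_def using x gnz g0 unfolding X0c by auto
    qed
  qed
  hence "card X0 = card Sset" by (simp add: bij_betw_same_card)
  moreover have "card (proj_eigvariety m n (slap_tensor m n E) 0) = card X0"
    unfolding X0_def by (rule pv_card) (erule nz)
  ultimately show ?thesis by simp
qed

end


context hgc begin

lemma bound: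
  fixes u :: "nat \<Rightarrow> real" and mu :: real
  assumes upos: "\<forall>i<n. u i > 0"
    and ueq: "\<forall>i<n. real (hg_degree E i) * u i ^ (m-1) + (\<Sum>e\<in>Ei i. \<Prod>j\<in>e-{i}. u j) = mu * u i ^ (m-1)"
    and y: "eigenpair m n (slap_tensor m n E) lam y"
  shows "cmod lam \<le> mu"
proof -
  have nz: "\<exists>i<n. y i \<noteq> 0" and yeq: "\<forall>i<n. tensor_apply m n (slap_tensor m n E) y i = lam * y i ^ (m-1)"
    using y unfolding eigenpair_def by auto
  define R where "R = (\<lambda>i. cmod (y i) / u i)"
  define t where "t = Max (R ` {..<n})"
  have "0 \<in> {..<n}" using n1 by simp
  hence n0: "{..<n} \<noteq> {}" by blast
  have Rle: "R i \<le> t" if "i < n" for i unfolding t_def using that by auto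
  obtain i1 where i1: "i1 < n" "y i1 \<noteq> 0" using nz by auto
  have tp: "t > 0"
  proof -
    have "R i1 > 0" unfolding R_def using i1 upos by auto
    thus ?thesis using Rle[OF i1(1)] by simp
  qed
  obtain i0 where i0: "i0 < n" "R i0 = t"
  proof -
    have "t \<in> R ` {..<n}" unfolding t_def using n0 by (intro Max_in) auto
    thus ?thesis using that by auto
  qed
  have yle: "cmod (y j) \<le> t * u j" if "j < n" for j
    using Rle[OF that] upos that unfolding R_def by (simp add: divide_le_eq mult.commute)
  have y0: "cmod (y i0) = t * u i0" using i0 upos[rule_format, OF i0(1)] unfolding R_def by (auto simp: field_simps)
  have "cmod lam * (t * u i0) ^ (m-1) = cmod (lam * y i0 ^ (m-1))" using y0 by (simp add: norm_mult norm_power)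
  also have "lam * y i0 ^ (m-1) = of_nat (hg_degree E i0) * y i0 ^ (m-1) + (\<Sum>e\<in>Ei i0. \<Prod>j\<in>e-{i0}. y j)"
    using yeq i0 Q_apply by simp
  also have "cmod \<dots> \<le> real (hg_degree E i0) * cmod (y i0) ^ (m-1) + (\<Sum>e\<in>Ei i0. \<Prod>j\<in>e-{i0}. cmod (y j))"
  proof -
    have "cmod (of_nat (hg_degree E i0) * y i0 ^ (m-1) + (\<Sum>e\<in>Ei i0. \<Prod>j\<in>e-{i0}. y j))
        \<le> cmod (of_nat (hg_degree E i0) * y i0 ^ (m-1)) + cmod (\<Sum>e\<in>Ei i0. \<Prod>j\<in>e-{i0}. y j)"
      by (rule norm_triangle_ineq)
    also have "cmod (\<Sum>e\<in>Ei i0. \<Prod>j\<in>e-{i0}. y j) \<le> (\<Sum>e\<in>Ei i0. \<Prod>j\<in>e-{i0}. cmod (y j))"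
      by (rule order_trans[OF norm_sum]) (simp add: prod_norm)
    finally show ?thesis by (simp add: norm_mult norm_power)
  qed
  also have "\<dots> \<le> real (hg_degree E i0) * (t * u i0) ^ (m-1) + (\<Sum>e\<in>Ei i0. \<Prod>j\<in>e-{i0}. t * u j)"
  proof (rule add_mono)
    show "real (hg_degree E i0) * cmod (y i0) ^ (m-1) \<le> real (hg_degree E i0) * (t * u i0) ^ (m-1)"
      using y0 by simp
    show "(\<Sum>e\<in>Ei i0. \<Prod>j\<in>e-{i0}. cmod (y j)) \<le> (\<Sum>e\<in>Ei i0. \<Prod>j\<in>e-{i0}. t * u j)"
    proof (rule sum_mono)
      fix e assume e: "e \<in> Ei i0"
      hence eE: "e \<in> E" unfolding Ei_def by auto
      show "(\<Prod>j\<in>e-{i0}. cmod (y j)) \<le> (\<Prod>j\<in>e-{i0}. t * u j)"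
        using yle edge_sub[OF eE] by (intro prod_mono) auto
    qed
  qed
  also have "\<dots> = t ^ (m-1) * (real (hg_degree E i0) * u i0 ^ (m-1) + (\<Sum>e\<in>Ei i0. \<Prod>j\<in>e-{i0}. u j))"
  proof -
    have "(\<Sum>e\<in>Ei i0. \<Prod>j\<in>e-{i0}. t * u j) = (\<Sum>e\<in>Ei i0. t ^ (m-1) * (\<Prod>j\<in>e-{i0}. u j))"
      using card_minus by (intro sum.cong) (auto simp: prod.distrib Ei_def)
    thus ?thesis by (simp add: sum_distrib_left power_mult_distrib algebra_simps)
  qed
  also have "\<dots> = mu * (t * u i0) ^ (m-1)" using ueq i0 by (simp add: power_mult_distrib)
  finally have "cmod lam * (t * u i0) ^ (m-1) \<le> mu * (t * u i0) ^ (m-1)" .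
  moreover have "(t * u i0) ^ (m-1) > 0" using tp upos i0 by simp
  ultimately show ?thesis by simp
qed

theorem PV_rho:
  "\<exists>mu::real. complex_of_real (spectral_radius m n (slap_tensor m n E)) = complex_of_real mu \<and>
     card (proj_eigvariety m n (slap_tensor m n E) (complex_of_real mu)) = card Sset"
proof -
  obtain u mu where upos: "\<forall>i<n. u i > 0" and usup: "\<forall>i\<ge>n. u i = 0" and u0: "u 0 = 1"
    and ueq: "\<forall>i<n. real (hg_degree E i) * u i ^ (m-1) + (\<Sum>e\<in>Ei i. \<Prod>j\<in>e-{i}. u j) = mu * u i ^ (m-1)"
    using perron by blast
  define U where "U = (\<lambda>i. complex_of_real (u i))"
  have mu0: "mu \<ge> 0"
  proof -
    have "real (hg_degree E 0) * u 0 ^ (m-1) + (\<Sum>e\<in>Ei 0. \<Prod>j\<in>e-{0}. u j) = mu * u 0 ^ (m-1)"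
      using ueq n1 by simp
    hence "mu = real (hg_degree E 0) + (\<Sum>e\<in>Ei 0. \<Prod>j\<in>e-{0}. u j)" using u0 by simp
    moreover have "(\<Sum>e\<in>Ei 0. \<Prod>j\<in>e-{0}. u j) \<ge> 0"
    proof (intro sum_nonneg prod_nonneg)
      fix e j assume "e \<in> Ei 0" "j \<in> e - {0}"
      hence eE: "e \<in> E" and je: "j \<in> e" unfolding Ei_def by auto
      have "j < n" using edge_sub[OF eE] je by auto
      thus "0 \<le> u j" using upos by (simp add: less_imp_le)
    qed
    ultimately show ?thesis by simp
  qed
  have QU: "tensor_apply m n (slap_tensor m n E) (\<lambda>i. d i * U i) i = of_real mu * (d i * U i) ^ (m-1)"
    if i: "i < n" and d: "\<forall>e\<in>E. \<forall>i\<in>e. (\<Prod>j\<in>e-{i}. d j) = d i ^ (m-1)" for d i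
  proof -
    have r: "of_real (real (hg_degree E i) * u i ^ (m-1)) + of_real (\<Sum>e\<in>Ei i. \<Prod>j\<in>e-{i}. u j) = (of_real (mu * u i ^ (m-1)) :: complex)"
      using ueq i by (metis of_real_add)
    have "(\<Sum>e\<in>Ei i. \<Prod>j\<in>e-{i}. d j * U j) = (\<Sum>e\<in>Ei i. d i ^ (m-1) * of_real (\<Prod>j\<in>e-{i}. u j))"
      using d unfolding Ei_def U_def by (intro sum.cong) (auto simp: prod.distrib)
    also have "\<dots> = d i ^ (m-1) * of_real (\<Sum>e\<in>Ei i. \<Prod>j\<in>e-{i}. u j)" by (simp add: sum_distrib_left)
    finally have "tensor_apply m n (slap_tensor m n E) (\<lambda>i. d i * U i) i
       = d i ^ (m-1) * (of_real (real (hg_degree E i) * u i ^ (m-1)) + of_real (\<Sum>e\<in>Ei i. \<Prod>j\<in>e-{i}. u j))"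
      using Q_apply[OF i] unfolding U_def by (simp add: power_mult_distrib algebra_simps)
    also have "\<dots> = d i ^ (m-1) * of_real (mu * u i ^ (m-1))" by (simp only: r)
    finally show ?thesis unfolding U_def by (simp add: power_mult_distrib)
  qed
  have Ueig: "eigenpair m n (slap_tensor m n E) (of_real mu) U"
  proof -
    have "tensor_apply m n (slap_tensor m n E) (\<lambda>i. 1 * U i) i = of_real mu * (1 * U i) ^ (m-1)" if "i < n" for i
      by (rule QU[OF that]) (simp add: card_minus)
    thus ?thesis unfolding eigenpair_def U_def using usup u0 n1 by (auto intro!: exI[of _ 0])
  qed
  have sr: "spectral_radius m n (slap_tensor m n E) = mu"
    unfolding spectral_radius_def
  proof (rule cSup_eq_maximum)
    show "mu \<in> {cmod lam |lam. tensor_eigenvalue m n (slap_tensor m n E) lam}"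
      using Ueig mu0 unfolding tensor_eigenvalue_def by (auto intro!: exI[of _ "of_real mu"])
    show "\<And>x. x \<in> {cmod lam |lam. tensor_eigenvalue m n (slap_tensor m n E) lam} \<Longrightarrow> x \<le> mu"
      using bound[OF upos ueq] unfolding tensor_eigenvalue_def by auto
  qed
  have ueq': "\<forall>i<n. (\<Sum>e\<in>Ei i. \<Prod>j\<in>e-{i}. u j) = (mu - real (hg_degree E i)) * u i ^ (m-1)"
    using ueq by (simp add: algebra_simps)
  have gen: "\<exists>t>0. (\<forall>i<n. cmod (x i) = t * u i) \<and>
     (\<forall>e\<in>E. \<forall>i\<in>e. (\<Prod>j\<in>e-{i}. x j) = 1 * of_real ((\<Prod>j\<in>e-{i}. u j) / u i ^ (m-1)) * x i ^ (m-1))"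
    if x: "eigenpair m n (slap_tensor m n E) (of_real mu) x" for x
  proof (rule GEN[OF upos ueq'])
    show "cmod (1::complex) = 1" by simp
    show "\<exists>i<n. x i \<noteq> 0" using x unfolding eigenpair_def by auto
    show "\<forall>i<n. (\<Sum>e\<in>Ei i. \<Prod>j\<in>e-{i}. x j) = 1 * of_real (mu - real (hg_degree E i)) * x i ^ (m-1)"
    proof (intro allI impI)
      fix i assume i: "i < n"
      have "of_nat (hg_degree E i) * x i ^ (m-1) + (\<Sum>e\<in>Ei i. \<Prod>j\<in>e-{i}. x j) = of_real mu * x i ^ (m-1)"
        using x i Q_apply[OF i] unfolding eigenpair_def by auto
      thus "(\<Sum>e\<in>Ei i. \<Prod>j\<in>e-{i}. x j) = 1 * of_real (mu - real (hg_degree E i)) * x i ^ (m-1)"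
        by (simp add: algebra_simps)
    qed
  qed
  have nz: "x 0 \<noteq> 0" if x: "eigenpair m n (slap_tensor m n E) (of_real mu) x" for x
  proof -
    obtain t where t: "t > 0" "\<forall>i<n. cmod (x i) = t * u i" using gen[OF x] by blast
    have "cmod (x 0) = t * u 0" using t n1 by simp
    moreover have "t * u 0 > 0" using t upos n1 by simp
    ultimately show ?thesis by auto
  qed
  define X0 where "X0 = {x. eigenpair m n (slap_tensor m n E) (of_real mu) x \<and> x 0 = 1}"
  have Unz: "U i \<noteq> 0" if "i < n" for i using upos that unfolding U_def by auto
  have U0: "U 0 = 1" unfolding U_def using u0 by simp
  have "bij_betw (\<lambda>d i. d i * U i) Sset X0"
  proof (rule bij_betw_byWitness[where f' = "\<lambda>x i. x i / U i"])
    show "\<forall>a\<in>Sset. (\<lambda>i. a i * U i / U i) = a"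
    proof
      fix d assume d: "d \<in> Sset"
      show "(\<lambda>i. d i * U i / U i) = d"
      proof
        fix i show "d i * U i / U i = d i" using d Unz unfolding Sset_def by (cases "i < n") auto
      qed
    qed
    show "\<forall>a'\<in>X0. (\<lambda>i. a' i / U i * U i) = a'"
    proof
      fix x assume x: "x \<in> X0"
      show "(\<lambda>i. x i / U i * U i) = x"
      proof
        fix i show "x i / U i * U i = x i" using x Unz unfolding X0_def eigenpair_def by (cases "i < n") auto
      qed
    qed
    show "(\<lambda>d i. d i * U i) ` Sset \<subseteq> X0"
    proof (rule image_subsetI)
      fix d assume d: "d \<in> Sset"
      have st: "\<forall>e\<in>E. \<forall>i\<in>e. (\<Prod>j\<in>e-{i}. d j) = d i ^ (m-1)" using d unfolding Sset_def stabC_def by auto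
      have "eigenpair m n (slap_tensor m n E) (of_real mu) (\<lambda>i. d i * U i)"
        unfolding eigenpair_def using QU[OF _ st] d U0 n1 unfolding Sset_def by (auto intro!: exI[of _ 0])
      thus "(\<lambda>i. d i * U i) \<in> X0" unfolding X0_def using d U0 unfolding Sset_def by auto
    qed
    show "(\<lambda>x i. x i / U i) ` X0 \<subseteq> Sset"
    proof (rule image_subsetI)
      fix x assume x: "x \<in> X0"
      have xe: "eigenpair m n (slap_tensor m n E) (of_real mu) x" and x0: "x 0 = 1" using x unfolding X0_def by auto
      obtain t where t: "t > 0" "\<forall>i<n. cmod (x i) = t * u i"
        "\<forall>e\<in>E. \<forall>i\<in>e. (\<Prod>j\<in>e-{i}. x j) = 1 * of_real ((\<Prod>j\<in>e-{i}. u j) / u i ^ (m-1)) * x i ^ (m-1)"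
        using gen[OF xe] by blast
      have xnz: "x i \<noteq> 0" if i: "i < n" for i
      proof -
        have "cmod (x i) = t * u i" using t i by simp
        moreover have "t * u i > 0" using t upos i by simp
        ultimately show ?thesis by auto
      qed
      have "stabC (\<lambda>i. x i / U i)" unfolding stabC_def
      proof (intro ballI)
        fix e i assume e: "e \<in> E" and ie: "i \<in> e"
        have i: "i < n" using edge_sub[OF e] ie by auto
        have pU: "(\<Prod>j\<in>e-{i}. U j) = of_real (\<Prod>j\<in>e-{i}. u j)" unfolding U_def by simp
        have "(\<Prod>j\<in>e-{i}. u j) > 0" using upos edge_sub[OF e] by (intro prod_pos) auto
        hence pu: "(\<Prod>j\<in>e-{i}. u j) \<noteq> 0" by simp
        have pu': "(\<Prod>j\<in>e-{i}. complex_of_real (u j)) \<noteq> 0" using pu by (metis of_real_prod of_real_eq_0_iff)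
        have "(\<Prod>j\<in>e-{i}. x j / U j) = (\<Prod>j\<in>e-{i}. x j) / (\<Prod>j\<in>e-{i}. U j)" by (rule prod_dividef)
        also have "\<dots> = of_real ((\<Prod>j\<in>e-{i}. u j) / u i ^ (m-1)) * x i ^ (m-1) / of_real (\<Prod>j\<in>e-{i}. u j)"
          using t(3) e ie pU by simp
        also have "\<dots> = (x i / U i) ^ (m-1)" unfolding U_def using pu pu' upos i
          by (simp add: field_simps power_divide)
        finally show "(\<Prod>j\<in>e-{i}. x j / U j) = (x i / U i) ^ (m-1)" .
      qed
      moreover have "\<forall>i<n. x i / U i \<noteq> 0" using xnz Unz by simp
      moreover have "\<forall>i\<ge>n. x i / U i = 0" using xe unfolding eigenpair_def by simp
      moreover have "x 0 / U 0 = 1" using x0 U0 by simp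
      ultimately show "(\<lambda>i. x i / U i) \<in> Sset" unfolding Sset_def by auto
    qed
  qed
  hence "card X0 = card Sset" by (simp add: bij_betw_same_card)
  moreover have "card (proj_eigvariety m n (slap_tensor m n E) (of_real mu)) = card X0"
    unfolding X0_def by (rule pv_card) (erule nz)
  ultimately show ?thesis using sr by auto
qed

end


theorem theorem3p7:
  fixes m n k r :: nat and E :: "nat set set" and e :: "nat \<Rightarrow> nat set" and d :: "nat \<Rightarrow> int"
  assumes "m \<ge> 2" and "n \<ge> 1"
    and "uniform_hypergraph m n E"
    and "hg_connected n E"
    and "odd_colorable m E"
    and "bij_betw e {0..<k} E"
    and "has_snf_mod m k n (incidence e) r d"
  shows "stab_index m n (slap_tensor m n E) = stab_index m n (lap_tensor m n E)
       \<and> stab_index m n (lap_tensor m n E) = stab_index m n (adj_tensor m n E)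
       \<and> real (stab_index m n (adj_tensor m n E)) =
           real m powi (int n - 1 - int r) * (\<Prod>i<r. real_of_int (d i))
       \<and> stab_index m n (slap_tensor m n E) =
           card (proj_eigvariety m n (slap_tensor m n E)
                   (complex_of_real (spectral_radius m n (slap_tensor m n E))))
       \<and> card (proj_eigvariety m n (slap_tensor m n E)
                   (complex_of_real (spectral_radius m n (slap_tensor m n E))))
           = card (proj_eigvariety m n (slap_tensor m n E) 0)
       \<and> card (proj_eigvariety m n (slap_tensor m n E) 0)
           = card (proj_eigvariety m n (lap_tensor m n E) 0)"
proof -
  interpret hgc m n E
    by unfold_locales (use assms in auto)
  obtain mu where mu: "complex_of_real (spectral_radius m n (slap_tensor m n E)) = complex_of_real mu"
    and pv: "card (proj_eigvariety m n (slap_tensor m n E) (complex_of_real mu)) = card Sset"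
    using PV_rho by blast
  show ?thesis
    using stab_Q stab_L stab_A stab_formula[OF assms(6) assms(7)] PV0_Q[OF assms(5)] PV0_L mu pv
    by simp
qed

end
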